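(* Let $S$ be a strongly $E^*$-unitary inverse semigroup, let $R$ be a commutative unital ring, and let $\varphi_1:S^\times\to G_1$ and $\varphi_2:S^\times\to G_2$ be two pure gradings of $S$. Then $L_R(S,\varphi_1)\cong L_R(S,\varphi_2)$ as $R$-algebras.
   Context: $S$ is an inverse semigroup with zero, $s^*$ the unique inverse of $s$, $E$ its idempotents (a meet semilattice with $x\wedge y=xy$, least element $0$), $S^\times=S\setminus\{0\}$, $E^\times=E\setminus\{0\}$. A pure grading is a map $\varphi:S^\times\to G$ to a group with $\varphi(ab)=\varphi(a)\varphi(b)$ whenever $ab\ne0$ and $\varphi^{-1}(1_G)=E^\times$; $S$ is strongly $E^*$-unitary if it has one. For $g\in G$, $E_g=\{x\in E: x\le ss^*$ for some $s$ with $\varphi(s)=g\}$ if $\varphi^{-1}(g)\ne\emptyset$, else $\{0\}$. $\phi_g:E_{g^{-1}}\to E_g$, $x\mapsto sxs^*$ (any $s$ with $\varphi(s)=g$, $x\le s^*s$) is a meet-semilattice isomorphism. For a meet semilattice $P$ with $0$: a filter is a subset $F$, $\emptyset\ne F\ne P$, closed upwards and under meets; $F(P)$ has topology generated by $\{F:x\in F\}$; tight filters $T(P)$ are the closure of the ultrafilters; $V^P_{(x:x_1,\dots,x_n)}=\{\xi\in T(P):x\in\xi, x_i\notin\xi\}$; $\mathcal T_c(P)$ is the generalized Boolean algebra of compact open subsets of $T(P)$. $\mathcal T_c(E_g)$ is identified with the ideal of $\mathcal T_c(E)$ consisting of compact open sets contained in $\bigcup_{x\in E_g}V^E_x$ (via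 $V^{E_g}_{(x:x_1,\dots)}\mapsto V^E_{(x:x_1,\dots)}$), and $\hat\phi_g:\mathcal T_c(E_{g^{-1}})\to\mathcal T_c(E_g)$ is the isomorphism induced by $\phi_g$ ($V_{(x:x_1,\dots,x_n)}\mapsto V_{(\phi_g(x):\phi_g(x_1),\dots,\phi_g(x_n))}$). $\Phi=(\{\mathcal T_c(E_g)\},\{\hat\phi_g\})$ is a partial action of $G$ on $\mathcal T_c(E)$. For a partial action $\Phi=(\{\mathcal I_t\},\{\phi_t\})$ on a generalized Boolean algebra $\mathcal B$ and commutative unital ring $R$: $\mathrm{Lc}(R,\mathcal B)$ is the $R$-algebra of functions $f:R\setminus\{0\}\to\mathcal B$ with pairwise disjoint values, almost all $0$, viewed as the function $\sum_r r1_{f(r)}$ (equivalently locally constant compactly supported $R$-valued functions on the Stone dual of $\mathcal B$); the partial skew group ring $\mathrm{Lc}(R,\mathcal B)\rtimes_\Phi G$ consists of finite sums $\sum_t f_t\delta_t$, $f_t\in\mathrm{Lc}(R,\mathcal I_t)$, with $(a\delta_s)(b\delta_t)=\tilde\phi_s(\tilde\phi_{s^{-1}}(a)b)\delta_{st}$, $\tilde\phi_t(f)=\phi_t\circ f$. Define $L_R(S,\varphi):=\mathrm{Lc}(R,\mathcal T_c(E))\rtimes_\Phi G$. *)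

theory Defs
  imports "HOL-Analysis.Abstract_Topology" "HOL-Algebra.Group"
begin

text \<open>The inverse semigroup S with zero is the whole type 'a; multiplication is (*) and the
zero is 0 (class mult_zero: 0 * a = 0 = a * 0).\<close>

definition inverse_semigroup_with_zero :: "'a::{semigroup_mult,mult_zero} itself \<Rightarrow> bool" where
  "inverse_semigroup_with_zero _ \<longleftrightarrow> (\<forall>s::'a. \<exists>!t. s * t * s = s \<and> t * s * t = t)"

definition sinv :: "'a::{semigroup_mult,mult_zero} \<Rightarrow> 'a" where
  "sinv s = (THE t. s * t * s = s \<and> t * s * t = t)"

definition idems :: "'a::{semigroup_mult,mult_zero} set" where
  "idems = {e. e * e = e}"

definition idem_le :: "'a::{semigroup_mult,mult_zero} \<Rightarrow> 'a \<Rightarrow> bool" where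
  "idem_le x y \<longleftrightarrow> x * y = x"

definition pure_grading :: "('g, 'b) monoid_scheme \<Rightarrow> ('a::{semigroup_mult,mult_zero} \<Rightarrow> 'g) \<Rightarrow> bool" where
  "pure_grading G \<phi> \<longleftrightarrow> group G
     \<and> (\<forall>s. s \<noteq> 0 \<longrightarrow> \<phi> s \<in> carrier G)
     \<and> (\<forall>a b. a \<noteq> 0 \<longrightarrow> b \<noteq> 0 \<longrightarrow> a * b \<noteq> 0 \<longrightarrow> \<phi> (a * b) = \<phi> a \<otimes>\<^bsub>G\<^esub> \<phi> b)
     \<and> {s. s \<noteq> 0 \<and> \<phi> s = \<one>\<^bsub>G\<^esub>} = idems - {0}"

definition Eg :: "('a::{semigroup_mult,mult_zero} \<Rightarrow> 'g) \<Rightarrow> 'g \<Rightarrow> 'a set" where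
  "Eg \<phi> g = (if \<exists>s. s \<noteq> 0 \<and> \<phi> s = g
              then {x \<in> idems. \<exists>s. s \<noteq> 0 \<and> \<phi> s = g \<and> idem_le x (s * sinv s)}
              else {0})"

definition phig :: "('a::{semigroup_mult,mult_zero} \<Rightarrow> 'g) \<Rightarrow> 'g \<Rightarrow> 'a \<Rightarrow> 'a" where
  "phig \<phi> g x = (let s = (SOME s. s \<noteq> 0 \<and> \<phi> s = g \<and> idem_le x (sinv s * s)) in s * x * sinv s)"

definition is_filter :: "'a::{semigroup_mult,mult_zero} set \<Rightarrow> bool" where
  "is_filter F \<longleftrightarrow> F \<subseteq> idems \<and> F \<noteq> {} \<and> F \<noteq> idems
     \<and> (\<forall>x\<in>F. \<forall>y\<in>idems. idem_le x y \<longrightarrow> y \<in> F)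
     \<and> (\<forall>x\<in>F. \<forall>y\<in>F. x * y \<in> F)"

definition filters :: "'a::{semigroup_mult,mult_zero} set set" where
  "filters = {F. is_filter F}"

definition ultrafilters :: "'a::{semigroup_mult,mult_zero} set set" where
  "ultrafilters = {F \<in> filters. \<forall>F'\<in>filters. F \<subseteq> F' \<longrightarrow> F' = F}"

text \<open>topology on the filters: generated by the sets {F. x \<in> F} and their complements
  {F. x \<notin> F} (the product topology from {0,1}^E)\<close>
definition filter_top :: "'a::{semigroup_mult,mult_zero} set topology" where
  "filter_top = topology_generated_by
     ({filters} \<union> (\<lambda>x. {F \<in> filters. x \<in> F}) ` idems \<union> (\<lambda>x. {F \<in> filters. x \<notin> F}) ` idems)"

definition tight_filters :: "'a::{semigroup_mult,mult_zero} set set" where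
  "tight_filters = filter_top closure_of ultrafilters"

definition tight_top :: "'a::{semigroup_mult,mult_zero} set topology" where
  "tight_top = subtopology filter_top tight_filters"

definition Vset :: "'a::{semigroup_mult,mult_zero} \<Rightarrow> 'a set \<Rightarrow> 'a set set" where
  "Vset x Xs = {\<xi> \<in> tight_filters. x \<in> \<xi> \<and> (\<forall>y\<in>Xs. y \<notin> \<xi>)}"

definition Tc :: "'a::{semigroup_mult,mult_zero} set set set" where
  "Tc = {U. openin tight_top U \<and> compactin tight_top U}"

definition Tcg :: "('a::{semigroup_mult,mult_zero} \<Rightarrow> 'g) \<Rightarrow> 'g \<Rightarrow> 'a set set set" where
  "Tcg \<phi> g = {U \<in> Tc. U \<subseteq> (\<Union>x\<in>Eg \<phi> g. Vset x {})}"

text \<open>hat phi_g : T_c(E_{g^{-1}}) \<rightarrow> T_c(E_g), determined by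
  V_(x:x_1..x_n) \<mapsto> V_(phi_g x : phi_g x_1 .. phi_g x_n); on a general compact open set U
  it is the union of the images of the basic sets V_(x:x_1..x_n) (x, x_i \<in> E_{g^{-1}}) contained in U.\<close>
definition hatphi :: "('g, 'b) monoid_scheme \<Rightarrow> ('a::{semigroup_mult,mult_zero} \<Rightarrow> 'g) \<Rightarrow> 'g
    \<Rightarrow> 'a set set \<Rightarrow> 'a set set" where
  "hatphi G \<phi> g U = \<Union>{Vset (phig \<phi> g x) (phig \<phi> g ` Xs) | x Xs.
       x \<in> Eg \<phi> (inv\<^bsub>G\<^esub> g) \<and> finite Xs \<and> Xs \<subseteq> Eg \<phi> (inv\<^bsub>G\<^esub> g) \<and> Vset x Xs \<subseteq> U}"

text \<open>Lc(R,B): an element f : R - {0} \<rightarrow> B (pairwise disjoint values, almost all empty) is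
  identified with the function \<Sum> r 1_{f(r)} on the tight spectrum (points are filters,
  i.e. sets of elements of S); f(r) is then the preimage of r.\<close>
definition Lc :: "'a set set set \<Rightarrow> ('a set \<Rightarrow> 'r::comm_ring_1) set" where
  "Lc B = {h. finite (range h) \<and> (\<forall>r. r \<noteq> 0 \<longrightarrow> {\<xi>. h \<xi> = r} \<in> B)}"

text \<open>tilde phi_t (f) = hat phi_t \<circ> f\<close>
definition tildephi :: "('g, 'b) monoid_scheme \<Rightarrow> ('a::{semigroup_mult,mult_zero} \<Rightarrow> 'g) \<Rightarrow> 'g
    \<Rightarrow> ('a set \<Rightarrow> 'r::comm_ring_1) \<Rightarrow> ('a set \<Rightarrow> 'r)" where
  "tildephi G \<phi> t h = (\<lambda>\<xi>. \<Sum>r\<in>range h - {0}. if \<xi> \<in> hatphi G \<phi> t {\<eta>. h \<eta> = r} then r else 0)"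

text \<open>Elements \<Sum>_t f_t \<delta>_t of Lc(R,T_c(E)) \<rtimes> G are represented by the coefficient map t \<mapsto> f_t.\<close>
definition skew_carrier :: "('g, 'b) monoid_scheme \<Rightarrow> ('a::{semigroup_mult,mult_zero} \<Rightarrow> 'g)
    \<Rightarrow> ('g \<Rightarrow> 'a set \<Rightarrow> 'r::comm_ring_1) set" where
  "skew_carrier G \<phi> = {a. finite {t. a t \<noteq> (\<lambda>_. 0)}
       \<and> (\<forall>t. a t \<noteq> (\<lambda>_. 0) \<longrightarrow> t \<in> carrier G)
       \<and> (\<forall>t \<in> carrier G. a t \<in> Lc (Tcg \<phi> t))}"

definition skew_add :: "('g \<Rightarrow> 'a set \<Rightarrow> 'r::comm_ring_1) \<Rightarrow> ('g \<Rightarrow> 'a set \<Rightarrow> 'r) \<Rightarrow> ('g \<Rightarrow> 'a set \<Rightarrow> 'r)" where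
  "skew_add a b = (\<lambda>t \<xi>. a t \<xi> + b t \<xi>)"

definition skew_smult :: "'r::comm_ring_1 \<Rightarrow> ('g \<Rightarrow> 'a set \<Rightarrow> 'r) \<Rightarrow> ('g \<Rightarrow> 'a set \<Rightarrow> 'r)" where
  "skew_smult r a = (\<lambda>t \<xi>. r * a t \<xi>)"

text \<open>(a \<delta>_s)(b \<delta>_t) = tilde phi_s(tilde phi_{s^{-1}}(a) b) \<delta>_{st}, extended bilinearly\<close>
definition skew_mult :: "('g, 'b) monoid_scheme \<Rightarrow> ('a::{semigroup_mult,mult_zero} \<Rightarrow> 'g)
    \<Rightarrow> ('g \<Rightarrow> 'a set \<Rightarrow> 'r::comm_ring_1) \<Rightarrow> ('g \<Rightarrow> 'a set \<Rightarrow> 'r) \<Rightarrow> ('g \<Rightarrow> 'a set \<Rightarrow> 'r)" where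
  "skew_mult G \<phi> a b = (\<lambda>u \<xi>. \<Sum>(s, t) \<in> {(s, t). a s \<noteq> (\<lambda>_. 0) \<and> b t \<noteq> (\<lambda>_. 0) \<and> s \<otimes>\<^bsub>G\<^esub> t = u}.
       tildephi G \<phi> s (\<lambda>\<eta>. tildephi G \<phi> (inv\<^bsub>G\<^esub> s) (a s) \<eta> * b t \<eta>) \<xi>)"

definition LR_isomorphic :: "('g1, 'b1) monoid_scheme \<Rightarrow> ('a::{semigroup_mult,mult_zero} \<Rightarrow> 'g1)
    \<Rightarrow> ('g2, 'b2) monoid_scheme \<Rightarrow> ('a \<Rightarrow> 'g2) \<Rightarrow> 'r::comm_ring_1 itself \<Rightarrow> bool" where
  "LR_isomorphic G1 \<phi>1 G2 \<phi>2 _ \<longleftrightarrow>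
     (\<exists>\<Psi> :: ('g1 \<Rightarrow> 'a set \<Rightarrow> 'r) \<Rightarrow> ('g2 \<Rightarrow> 'a set \<Rightarrow> 'r).
        bij_betw \<Psi> (skew_carrier G1 \<phi>1) (skew_carrier G2 \<phi>2)
      \<and> (\<forall>a\<in>skew_carrier G1 \<phi>1. \<forall>b\<in>skew_carrier G1 \<phi>1.
            \<Psi> (skew_add a b) = skew_add (\<Psi> a) (\<Psi> b)
          \<and> \<Psi> (skew_mult G1 \<phi>1 a b) = skew_mult G2 \<phi>2 (\<Psi> a) (\<Psi> b))
      \<and> (\<forall>r. \<forall>a\<in>skew_carrier G1 \<phi>1. \<Psi> (skew_smult r a) = skew_smult r (\<Psi> a)))"

end

theory Submission
  imports Defs
begin


locale ISG =
  fixes ty :: "'a::{semigroup_mult,mult_zero} itself"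
  assumes isg: "inverse_semigroup_with_zero TYPE('a)"
begin

lemma ex1: "\<exists>!t. (s::'a) * t * s = s \<and> t * s * t = t"
  using isg unfolding inverse_semigroup_with_zero_def by blast

lemma sinv_prop: "(s::'a) * sinv s * s = s \<and> sinv s * s * sinv s = sinv s"
  unfolding sinv_def by (rule theI'[OF ex1])

lemma sinv1: "(s::'a) * sinv s * s = s" using sinv_prop by blast
lemma sinv2: "sinv (s::'a) * s * sinv s = sinv s" using sinv_prop by blast

lemma sinv_unique: "(s::'a) * t * s = s \<Longrightarrow> t * s * t = t \<Longrightarrow> sinv s = t"
  using ex1[of s] sinv_prop[of s] by blast

lemma sinv_sinv[simp]: "sinv (sinv (s::'a)) = s"
  by (rule sinv_unique) (simp_all add: sinv1 sinv2)

lemma sinv_idem: "(e::'a) * e = e \<Longrightarrow> sinv e = e"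
  by (rule sinv_unique) simp_all

lemma idemL: "(e::'a) * e = e \<Longrightarrow> e * (e * x) = e * x"
  by (metis mult.assoc)

lemma idem_prod:
  assumes e: "(e::'a) * e = e" and f: "f * f = f"
  shows "(e * f) * (e * f) = e * f"
proof -
  define a where "a = sinv (e * f)"
  have A1: "(e*f)*a*(e*f) = e*f" and A2: "a*(e*f)*a = a" unfolding a_def using sinv_prop by blast+
  have "(e*f)*(f*a*e)*(e*f) = e*(f*f)*a*(e*e)*f" by (simp add: mult.assoc)
  also have "\<dots> = e*f" using A1 e f by (simp add: mult.assoc)
  finally have B1: "(e*f)*(f*a*e)*(e*f) = e*f" .
  have "(f*a*e)*(e*f)*(f*a*e) = f*(a*(e*f)*a)*e" using e f by (simp add: mult.assoc idemL[OF e] idemL[OF f])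
  also have "\<dots> = f*a*e" using A2 by (simp add: mult.assoc)
  finally have B2: "(f*a*e)*(e*f)*(f*a*e) = f*a*e" .
  have fae: "f*a*e = a" using sinv_unique[OF B1 B2] a_def by simp
  have "a * a = (f*a*e)*(f*a*e)" using fae by simp
  also have "\<dots> = f*(a*(e*f)*a)*e" by (simp add: mult.assoc)
  also have "\<dots> = a" using A2 fae by (simp add: mult.assoc)
  finally have aa: "a*a = a" .
  have "sinv a = e * f" by (rule sinv_unique[OF A2 A1])
  with sinv_idem[OF aa] have efa: "e*f = a" by simp
  thus ?thesis using aa by simp
qed

lemma idem_comm:
  assumes e: "(e::'a) * e = e" and f: "f * f = f"
  shows "e * f = f * e"
proof -
  have efi: "(e*f)*(e*f) = e*f" by (rule idem_prod[OF e f])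
  have fei: "(f*e)*(f*e) = f*e" by (rule idem_prod[OF f e])
  have "(e*f)*(f*e)*(e*f) = (e*f)*(e*f)" using e f by (simp add: mult.assoc idemL[OF e] idemL[OF f])
  hence C1: "(e*f)*(f*e)*(e*f) = e*f" using efi by simp
  have "(f*e)*(e*f)*(f*e) = (f*e)*(f*e)" using e f by (simp add: mult.assoc idemL[OF e] idemL[OF f])
  hence C2: "(f*e)*(e*f)*(f*e) = f*e" using fei by simp
  have "sinv (e*f) = f*e" by (rule sinv_unique[OF C1 C2])
  moreover have "sinv (e*f) = e*f" by (rule sinv_idem[OF efi])
  ultimately show ?thesis by simp
qed


lemma sinv_zero[simp]: "sinv (0::'a) = 0"
  by (rule sinv_unique) simp_all

lemma sinv_nz: "(s::'a) \<noteq> 0 \<Longrightarrow> sinv s \<noteq> 0"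
  by (metis sinv1 mult_zero_left mult_zero_right)

lemma ssinv_idem: "((s::'a) * sinv s) * (s * sinv s) = s * sinv s"
  by (metis sinv1 mult.assoc)
lemma sinvs_idem: "(sinv (s::'a) * s) * (sinv s * s) = sinv s * s"
  by (metis sinv2 mult.assoc)

lemma sinv1': "(s::'a) * (sinv s * (s * x)) = s * x" by (metis sinv1 mult.assoc)
lemma sinv2': "sinv (s::'a) * (s * (sinv s * x)) = sinv s * x" by (metis sinv2 mult.assoc)
lemma sinv1'': "(s::'a) * (sinv s * s) = s" by (metis sinv1 mult.assoc)
lemma sinv2'': "sinv (s::'a) * (s * sinv s) = sinv s" by (metis sinv2 mult.assoc)

lemma sinv_mult: "sinv ((a::'a) * b) = sinv b * sinv a"
proof (rule sinv_unique)
  have c: "(b * sinv b) * (sinv a * a) = (sinv a * a) * (b * sinv b)"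
    by (rule idem_comm[OF ssinv_idem sinvs_idem])
  have "a * b * (sinv b * sinv a) * (a * b) = a * ((b * sinv b) * (sinv a * a)) * b"
    by (simp add: mult.assoc)
  also have "\<dots> = a * ((sinv a * a) * (b * sinv b)) * b" using c by simp
  also have "\<dots> = (a * sinv a * a) * (b * sinv b * b)" by (simp add: mult.assoc)
  finally show "a * b * (sinv b * sinv a) * (a * b) = a * b" by (simp add: sinv1)
  have "sinv b * sinv a * (a * b) * (sinv b * sinv a) = sinv b * ((sinv a * a) * (b * sinv b)) * sinv a"
    by (simp add: mult.assoc)
  also have "\<dots> = sinv b * ((b * sinv b) * (sinv a * a)) * sinv a" using c by simp
  also have "\<dots> = (sinv b * b * sinv b) * (sinv a * a * sinv a)" by (simp add: mult.assoc)
  finally show "sinv b * sinv a * (a * b) * (sinv b * sinv a) = sinv b * sinv a" by (simp add: sinv2)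
qed

lemma idem_le_trans: "idem_le (x::'a) y \<Longrightarrow> idem_le y z \<Longrightarrow> idem_le x z"
  unfolding idem_le_def by (metis mult.assoc)

lemma idem_le_refl: "(x::'a) * x = x \<Longrightarrow> idem_le x x"
  unfolding idem_le_def by simp

lemma idem_le_prod1: "(x::'a) * x = x \<Longrightarrow> y * y = y \<Longrightarrow> idem_le (x * y) x"
proof -
  assume x: "x * x = x" and y: "y * y = y"
  have "y * x = x * y" by (rule idem_comm[OF y x])
  hence "x * y * x = (x * x) * y" by (simp add: mult.assoc)
  thus ?thesis unfolding idem_le_def using x by simp
qed

lemma idem_le_prod2: "(x::'a) * x = x \<Longrightarrow> y * y = y \<Longrightarrow> idem_le (x * y) y"
  unfolding idem_le_def by (simp add: mult.assoc)

lemma conj_idem: "(x::'a) * x = x \<Longrightarrow> (s * x * sinv s) * (s * x * sinv s) = s * x * sinv s"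
proof -
  assume x: "x * x = x"
  have c: "x * (sinv s * s) = (sinv s * s) * x" by (rule idem_comm[OF x sinvs_idem])
  have "(s * x * sinv s) * (s * x * sinv s) = s * (x * (sinv s * s)) * x * sinv s" by (simp add: mult.assoc)
  also have "\<dots> = (s * sinv s * s) * (x * x) * sinv s" using c by (simp add: mult.assoc)
  finally show ?thesis using x by (simp add: sinv1)
qed

lemma conj2: "(x::'a) * x = x \<Longrightarrow> sinv t * (t * x * sinv t) * t = x * (sinv t * t)"
proof -
  assume x: "x * x = x"
  have c: "x * (sinv t * t) = (sinv t * t) * x" by (rule idem_comm[OF x sinvs_idem])
  have "sinv t * (t * x * sinv t) * t = (sinv t * t) * x * (sinv t * t)" by (simp add: mult.assoc)
  also have "\<dots> = x * ((sinv t * t) * (sinv t * t))" using c by (simp add: mult.assoc sinv1' sinv2' sinv1'' sinv2'')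
  finally show ?thesis by (simp add: sinvs_idem)
qed

lemma conj2': "(x::'a) * x = x \<Longrightarrow> s * (sinv s * x * s) * sinv s = x * (s * sinv s)"
  using conj2[of x "sinv s"] by simp

lemma conj_mono:
  assumes p: "(p::'a) * p = p" and z: "z * z = z" and le: "idem_le p z"
  shows "idem_le (t * p * sinv t) (t * z * sinv t)"
proof -
  have c: "(sinv t * t) * z = z * (sinv t * t)" by (rule idem_comm[OF sinvs_idem z])
  have pz: "p * z = p" using le unfolding idem_le_def .
  have "(t * p * sinv t) * (t * z * sinv t) = t * p * ((sinv t * t) * z) * sinv t" by (simp add: mult.assoc)
  also have "\<dots> = t * (p * z) * (sinv t * t * sinv t)" using c by (simp add: mult.assoc)
  finally show ?thesis unfolding idem_le_def using pz by (simp add: sinv2)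
qed

lemma conj_mult: "(x2::'a) * x2 = x2 \<Longrightarrow> (s * x1 * sinv s) * (s * x2 * sinv s) = s * (x1 * x2) * sinv s"
proof -
  assume x2: "x2 * x2 = x2"
  have c: "(sinv s * s) * x2 = x2 * (sinv s * s)" by (rule idem_comm[OF sinvs_idem x2])
  have "(s * x1 * sinv s) * (s * x2 * sinv s) = s * x1 * ((sinv s * s) * x2) * sinv s" by (simp add: mult.assoc)
  also have "\<dots> = s * x1 * x2 * (sinv s * s * sinv s)" using c by (simp add: mult.assoc)
  finally show ?thesis by (simp add: sinv2 mult.assoc sinv2'')
qed

lemma idems_mult: "x \<in> idems \<Longrightarrow> y \<in> idems \<Longrightarrow> (x::'a) * y \<in> idems"
  unfolding idems_def using idem_prod by blast

lemma zero_idem[simp]: "(0::'a) \<in> idems" unfolding idems_def by simp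

lemma filter_idems: "is_filter F \<Longrightarrow> x \<in> F \<Longrightarrow> (x::'a) \<in> idems"
  unfolding is_filter_def by blast

lemma filter_idem: "is_filter F \<Longrightarrow> x \<in> F \<Longrightarrow> (x::'a) * x = x"
  using filter_idems unfolding idems_def by blast

lemma filter_up: "is_filter F \<Longrightarrow> x \<in> F \<Longrightarrow> y \<in> idems \<Longrightarrow> idem_le x y \<Longrightarrow> (y::'a) \<in> F"
  unfolding is_filter_def by blast

lemma filter_mult: "is_filter F \<Longrightarrow> x \<in> F \<Longrightarrow> y \<in> F \<Longrightarrow> (x::'a) * y \<in> F"
  unfolding is_filter_def by blast

lemma filter_nz: "is_filter F \<Longrightarrow> (0::'a) \<notin> F"
proof
  assume F: "is_filter F" and z: "0 \<in> F"
  have "idems \<subseteq> F"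
  proof
    fix y :: 'a assume "y \<in> idems"
    then show "y \<in> F" using filter_up[OF F z] unfolding idem_le_def by simp
  qed
  with F show False unfolding is_filter_def by blast
qed

lemma filter_nz': "is_filter F \<Longrightarrow> x \<in> F \<Longrightarrow> (x::'a) \<noteq> 0"
  using filter_nz by blast

lemma filter_prod_left: "is_filter F \<Longrightarrow> x * y \<in> F \<Longrightarrow> x \<in> idems \<Longrightarrow> y \<in> idems \<Longrightarrow> (x::'a) \<in> F"
  using filter_up[of F "x*y" x] idem_le_prod1[of x y] unfolding idems_def by blast

lemma filter_prod_right: "is_filter F \<Longrightarrow> x * y \<in> F \<Longrightarrow> x \<in> idems \<Longrightarrow> y \<in> idems \<Longrightarrow> (y::'a) \<in> F"
  using filter_up[of F "x*y" y] idem_le_prod2[of x y] unfolding idems_def by blast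

definition theta :: "'a \<Rightarrow> 'a set \<Rightarrow> 'a set" where
  "theta s \<xi> = {y \<in> idems. \<exists>x\<in>\<xi>. idem_le (s * x * sinv s) y}"

lemma theta_mem: "is_filter \<xi> \<Longrightarrow> x \<in> \<xi> \<Longrightarrow> s * x * sinv s \<in> theta s \<xi>"
  unfolding theta_def using conj_idem[OF filter_idem] idem_le_refl idems_def by blast

lemma theta_memI: "y \<in> idems \<Longrightarrow> x \<in> \<xi> \<Longrightarrow> idem_le (s * x * sinv s) y \<Longrightarrow> y \<in> theta s \<xi>"
  unfolding theta_def by blast

lemma theta_mono: "\<xi> \<subseteq> \<xi>' \<Longrightarrow> theta s \<xi> \<subseteq> theta s \<xi>'"
  unfolding theta_def by blast

lemma theta_filter:
  assumes F: "is_filter \<xi>" and e: "sinv s * s \<in> \<xi>"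
  shows "is_filter (theta s \<xi>)"
proof -
  have sub: "theta s \<xi> \<subseteq> idems" unfolding theta_def by blast
  have ne: "s * sinv s \<in> theta s \<xi>"
    using theta_mem[OF F e, of s] by (simp add: mult.assoc sinv1' sinv1'')
  have nz: "0 \<notin> theta s \<xi>"
  proof
    assume "0 \<in> theta s \<xi>"
    then obtain x where x: "x \<in> \<xi>" and le: "idem_le (s * x * sinv s) 0" unfolding theta_def by blast
    have z: "s * x * sinv s = 0" using le unfolding idem_le_def by simp
    have "sinv s * (s * x * sinv s) * s = x * (sinv s * s)" by (rule conj2[OF filter_idem[OF F x]])
    hence "x * (sinv s * s) = 0" using z by simp
    moreover have "x * (sinv s * s) \<in> \<xi>" using filter_mult[OF F x e] .
    ultimately show False using filter_nz[OF F] by simp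
  qed
  have up: "\<forall>x\<in>theta s \<xi>. \<forall>y\<in>idems. idem_le x y \<longrightarrow> y \<in> theta s \<xi>"
    unfolding theta_def using idem_le_trans by blast
  have meet: "\<forall>x\<in>theta s \<xi>. \<forall>y\<in>theta s \<xi>. x * y \<in> theta s \<xi>"
  proof (intro ballI)
    fix y1 y2 assume y1: "y1 \<in> theta s \<xi>" and y2: "y2 \<in> theta s \<xi>"
    then obtain x1 x2 where x1: "x1 \<in> \<xi>" "idem_le (s * x1 * sinv s) y1"
      and x2: "x2 \<in> \<xi>" "idem_le (s * x2 * sinv s) y2" unfolding theta_def by blast
    have i1: "y1 * y1 = y1" and i2: "y2 * y2 = y2" using y1 y2 unfolding theta_def idems_def by blast+
    define p where "p = s * x1 * sinv s"
    define q where "q = s * x2 * sinv s"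
    have pi: "p * p = p" unfolding p_def using conj_idem[OF filter_idem[OF F x1(1)]] .
    have qi: "q * q = q" unfolding q_def using conj_idem[OF filter_idem[OF F x2(1)]] .
    have py: "p * y1 = p" using x1(2) unfolding p_def idem_le_def .
    have qy: "q * y2 = q" using x2(2) unfolding q_def idem_le_def .
    have pq: "p * q = s * (x1 * x2) * sinv s" unfolding p_def q_def by (rule conj_mult[OF filter_idem[OF F x2(1)]])
    have c: "q * y1 = y1 * q" by (rule idem_comm[OF qi i1])
    have "p * q * (y1 * y2) = p * (q * y1) * y2" by (simp add: mult.assoc)
    also have "\<dots> = (p * y1) * (q * y2)" using c by (simp add: mult.assoc)
    finally have "idem_le (p * q) (y1 * y2)" unfolding idem_le_def using py qy by simp
    moreover have "y1 * y2 \<in> idems" using i1 i2 idems_mult idems_def by blast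
    moreover have "x1 * x2 \<in> \<xi>" using filter_mult[OF F x1(1) x2(1)] .
    ultimately show "y1 * y2 \<in> theta s \<xi>" unfolding theta_def pq by blast
  qed
  show ?thesis unfolding is_filter_def using sub ne nz up meet zero_idem by blast
qed

lemma theta_ss: "is_filter \<xi> \<Longrightarrow> sinv s * s \<in> \<xi> \<Longrightarrow> s * sinv s \<in> theta s \<xi>"
  using theta_mem[of \<xi> "sinv s * s" s] by (simp add: mult.assoc sinv1' sinv1'')

lemma theta_inv:
  assumes F: "is_filter \<xi>" and e: "sinv s * s \<in> \<xi>"
  shows "theta (sinv s) (theta s \<xi>) = \<xi>"
proof
  show "theta (sinv s) (theta s \<xi>) \<subseteq> \<xi>"
  proof
    fix y assume "y \<in> theta (sinv s) (theta s \<xi>)"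
    then obtain z where y: "y \<in> idems" and z: "z \<in> theta s \<xi>" and le: "idem_le (sinv s * z * s) y"
      unfolding theta_def by auto
    obtain x where x: "x \<in> \<xi>" and zi: "z \<in> idems" and le2: "idem_le (s * x * sinv s) z"
      using z unfolding theta_def by blast
    have xi: "x * x = x" using filter_idem[OF F x] .
    have "idem_le (sinv s * (s * x * sinv s) * sinv (sinv s)) (sinv s * z * sinv (sinv s))"
      by (rule conj_mono[OF conj_idem[OF xi] _ le2]) (use zi in \<open>simp add: idems_def\<close>)
    hence "idem_le (x * (sinv s * s)) (sinv s * z * s)" using conj2[OF xi, of s] by simp
    hence "idem_le (x * (sinv s * s)) y" using le idem_le_trans by blast
    thus "y \<in> \<xi>" using filter_up[OF F filter_mult[OF F x e] y] by blast
  qed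
next
  show "\<xi> \<subseteq> theta (sinv s) (theta s \<xi>)"
  proof
    fix y assume y: "y \<in> \<xi>"
    have yi: "y * y = y" using filter_idem[OF F y] .
    have m: "s * y * sinv s \<in> theta s \<xi>" by (rule theta_mem[OF F y])
    have "sinv s * (s * y * sinv s) * s = y * (sinv s * s)" by (rule conj2[OF yi])
    moreover have "idem_le (y * (sinv s * s)) y" by (rule idem_le_prod1[OF yi sinvs_idem])
    ultimately have "idem_le (sinv s * (s * y * sinv s) * sinv (sinv s)) y" by simp
    thus "y \<in> theta (sinv s) (theta s \<xi>)" by (rule theta_memI[OF filter_idems[OF F y] m])
  qed
qed

lemma theta_inv':
  assumes F: "is_filter \<xi>" and e: "s * sinv s \<in> \<xi>"
  shows "theta s (theta (sinv s) \<xi>) = \<xi>"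
  using theta_inv[of \<xi> "sinv s"] assms by simp


lemma theta_ultra:
  assumes U: "\<xi> \<in> ultrafilters" and e: "sinv s * s \<in> \<xi>"
  shows "theta s \<xi> \<in> ultrafilters"
proof -
  have F: "is_filter \<xi>" using U unfolding ultrafilters_def filters_def by blast
  have Ft: "is_filter (theta s \<xi>)" by (rule theta_filter[OF F e])
  have "\<forall>F'\<in>filters. theta s \<xi> \<subseteq> F' \<longrightarrow> F' = theta s \<xi>"
  proof (intro ballI impI)
    fix F' assume F': "F' \<in> filters" and sub: "theta s \<xi> \<subseteq> F'"
    have F'f: "is_filter F'" using F' unfolding filters_def by blast
    have e': "s * sinv s \<in> F'" using theta_ss[OF F e] sub by blast
    have e'': "sinv (sinv s) * sinv s \<in> F'" using e' by simp
    have "theta (sinv s) (theta s \<xi>) \<subseteq> theta (sinv s) F'" by (rule theta_mono[OF sub])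
    hence "\<xi> \<subseteq> theta (sinv s) F'" using theta_inv[OF F e] by simp
    moreover have "theta (sinv s) F' \<in> filters" using theta_filter[OF F'f e''] unfolding filters_def by blast
    ultimately have "theta (sinv s) F' = \<xi>" using U unfolding ultrafilters_def by blast
    hence "theta s (theta (sinv s) F') = theta s \<xi>" by simp
    thus "F' = theta s \<xi>" using theta_inv'[OF F'f e'] by simp
  qed
  thus ?thesis unfolding ultrafilters_def filters_def using Ft by blast
qed

definition Gens :: "'a set set set" where
  "Gens = {filters} \<union> (\<lambda>x. {F \<in> filters. x \<in> F}) ` idems \<union> (\<lambda>x. {F \<in> filters. x \<notin> F}) ` idems"

lemma filter_top_eq: "filter_top = topology_generated_by Gens"
  unfolding filter_top_def Gens_def ..

lemma topspace_filter_top: "topspace filter_top = (filters :: 'a set set)"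
proof -
  have 1: "\<Union>Gens \<subseteq> filters" unfolding Gens_def by blast
  have 2: "filters \<subseteq> \<Union>Gens" unfolding Gens_def by blast
  from 1 2 have "\<Union>Gens = filters" by (rule antisym)
  thus ?thesis using topology_generated_by_topspace[of Gens] filter_top_eq by simp
qed

lemma tight_sub: "tight_filters \<subseteq> (filters :: 'a set set)"
proof -
  have "filter_top closure_of ultrafilters \<subseteq> topspace (filter_top :: 'a set topology)"
    by (rule closure_of_subset_topspace)
  thus ?thesis unfolding tight_filters_def topspace_filter_top .
qed

lemma tight_filter: "(\<xi>::'a set) \<in> tight_filters \<Longrightarrow> is_filter \<xi>"
proof -
  assume "\<xi> \<in> tight_filters"
  hence "\<xi> \<in> filters" using tight_sub by (rule subsetD[rotated])
  thus ?thesis unfolding filters_def by simp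
qed

lemma topspace_tight_top: "topspace tight_top = (tight_filters :: 'a set set)"
proof -
  have "topspace tight_top = topspace filter_top \<inter> (tight_filters :: 'a set set)"
    unfolding tight_top_def by simp
  thus ?thesis using tight_sub topspace_filter_top by blast
qed

definition box :: "'a \<Rightarrow> 'a set \<Rightarrow> 'a set set" where
  "box x N = {F \<in> filters. x \<in> F \<and> N \<inter> F = {}}"

lemma box_open:
  assumes x: "x \<in> idems" and N: "finite N" "N \<subseteq> idems"
  shows "openin filter_top (box x N)"
  using N
proof (induction N rule: finite_induct)
  case empty
  have "box x {} = {F \<in> filters. x \<in> F}" unfolding box_def by auto
  moreover have "{F \<in> filters. x \<in> F} \<in> Gens" unfolding Gens_def using x by blast
  ultimately show ?case unfolding filter_top_eq by (simp add: topology_generated_by_Basis)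
next
  case (insert y N)
  have "box x (insert y N) = box x N \<inter> {F \<in> filters. y \<notin> F}" unfolding box_def by auto
  moreover have "{F \<in> filters. y \<notin> F} \<in> Gens" unfolding Gens_def using insert by blast
  ultimately show ?case using insert unfolding filter_top_eq
    by (simp add: topology_generated_by_Basis openin_Int)
qed

lemma nbhd_gen:
  assumes "generate_topology_on Gens T"
  shows "\<forall>\<eta>\<in>T. \<eta> \<in> filters \<longrightarrow> (\<exists>x\<in>\<eta>. \<exists>N. finite N \<and> N \<subseteq> idems \<and> N \<inter> \<eta> = {} \<and> box x N \<subseteq> (T::'a set set))"
  using assms
proof (induction rule: generate_topology_on.induct)
  case Empty
  then show ?case by simp
next
  case (Int a b)
  show ?case
  proof (intro ballI impI)
    fix \<eta> assume h: "\<eta> \<in> a \<inter> b" "\<eta> \<in> filters"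
    then obtain x1 N1 where 1: "x1 \<in> \<eta>" "finite N1" "N1 \<subseteq> idems" "N1 \<inter> \<eta> = {}" "box x1 N1 \<subseteq> a"
      using Int.IH(1) by blast
    obtain x2 N2 where 2: "x2 \<in> \<eta>" "finite N2" "N2 \<subseteq> idems" "N2 \<inter> \<eta> = {}" "box x2 N2 \<subseteq> b"
      using Int.IH(2) h by blast
    have F: "is_filter \<eta>" using h unfolding filters_def by blast
    have "box (x1 * x2) (N1 \<union> N2) \<subseteq> box x1 N1 \<inter> box x2 N2"
    proof
      fix F assume "F \<in> box (x1 * x2) (N1 \<union> N2)"
      hence FF: "is_filter F" "x1 * x2 \<in> F" "(N1 \<union> N2) \<inter> F = {}" unfolding box_def filters_def by auto
      have "x1 \<in> F" using filter_prod_left[OF FF(1,2)] filter_idems[OF F 1(1)] filter_idems[OF F 2(1)] by blast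
      moreover have "x2 \<in> F" using filter_prod_right[OF FF(1,2)] filter_idems[OF F 1(1)] filter_idems[OF F 2(1)] by blast
      ultimately show "F \<in> box x1 N1 \<inter> box x2 N2" using FF unfolding box_def filters_def by auto
    qed
    thus "\<exists>x\<in>\<eta>. \<exists>N. finite N \<and> N \<subseteq> idems \<and> N \<inter> \<eta> = {} \<and> box x N \<subseteq> a \<inter> b"
    proof (intro bexI[of _ "x1*x2"] exI[of _ "N1 \<union> N2"] conjI)
      show "finite (N1 \<union> N2)" using 1 2 by simp
      show "N1 \<union> N2 \<subseteq> idems" using 1 2 by simp
      show "(N1 \<union> N2) \<inter> \<eta> = {}" using 1 2 by blast
      show "x1 * x2 \<in> \<eta>" using filter_mult[OF F 1(1) 2(1)] .
    qed (use 1 2 \<open>box (x1 * x2) (N1 \<union> N2) \<subseteq> box x1 N1 \<inter> box x2 N2\<close> in blast)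
  qed
next
  case (UN K)
  show ?case
  proof (intro ballI impI)
    fix \<eta> assume "\<eta> \<in> \<Union>K" "\<eta> \<in> filters"
    then obtain k where "k \<in> K" "\<eta> \<in> k" by blast
    with UN.IH \<open>\<eta> \<in> filters\<close> obtain x N where "x\<in>\<eta>" "finite N" "N \<subseteq> idems" "N \<inter> \<eta> = {}" "box x N \<subseteq> k" by blast
    thus "\<exists>x\<in>\<eta>. \<exists>N. finite N \<and> N \<subseteq> idems \<and> N \<inter> \<eta> = {} \<and> box x N \<subseteq> \<Union>K"
      using \<open>k \<in> K\<close> by blast
  qed
next
  case (Basis s)
  show ?case
  proof (intro ballI impI)
    fix \<eta> assume e: "\<eta> \<in> s" "\<eta> \<in> filters"
    have F: "is_filter \<eta>" using e unfolding filters_def by blast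
    then obtain x0 where x0: "x0 \<in> \<eta>" unfolding is_filter_def by blast
    from Basis consider "s = filters" | y where "y \<in> idems" "s = {F \<in> filters. y \<in> F}"
      | y where "y \<in> idems" "s = {F \<in> filters. y \<notin> F}" unfolding Gens_def by blast
    thus "\<exists>x\<in>\<eta>. \<exists>N. finite N \<and> N \<subseteq> idems \<and> N \<inter> \<eta> = {} \<and> box x N \<subseteq> s"
    proof cases
      case 1
      have "box x0 {} \<subseteq> s" using 1 unfolding box_def by blast
      thus ?thesis using x0 by blast
    next
      case (2 y)
      have "box y {} \<subseteq> s" using 2 unfolding box_def by blast
      moreover have "y \<in> \<eta>" using 2 e by blast
      ultimately show ?thesis by blast
    next
      case (3 y)
      have "box x0 {y} \<subseteq> s" using 3 unfolding box_def by blast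
      moreover have "{y} \<inter> \<eta> = {}" using 3 e by blast
      ultimately show ?thesis using x0 3 by blast
    qed
  qed
qed

lemma nbhd:
  assumes "openin filter_top T" "\<eta> \<in> T"
  shows "\<exists>x\<in>\<eta>. \<exists>N. finite N \<and> N \<subseteq> idems \<and> N \<inter> \<eta> = {} \<and> box x N \<subseteq> T"
proof -
  have "\<eta> \<in> filters" using assms openin_subset topspace_filter_top by blast
  moreover have "generate_topology_on Gens T" using assms(1) unfolding filter_top_eq
    by (simp add: openin_topology_generated_by_iff)
  ultimately show ?thesis using nbhd_gen assms(2) by blast
qed

lemma in_tight: "(\<xi>::'a set) \<in> tight_filters \<longleftrightarrow> \<xi> \<in> filters \<and> (\<forall>T. openin filter_top T \<and> \<xi> \<in> T \<longrightarrow> (\<exists>\<mu>\<in>ultrafilters. \<mu> \<in> T))"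
  unfolding tight_filters_def in_closure_of topspace_filter_top by (simp add: Bex_def conj_commute)

lemma Vset_box: "Vset x Xs = box x Xs \<inter> tight_filters"
  unfolding Vset_def box_def using tight_sub by (auto simp: disjoint_iff)

lemma Vset_open: "(x::'a) \<in> idems \<Longrightarrow> finite Xs \<Longrightarrow> Xs \<subseteq> idems \<Longrightarrow> openin tight_top (Vset x Xs)"
  unfolding tight_top_def openin_subtopology Vset_box by (rule exI[of _ "box x Xs"]) (simp add: box_open)

lemma theta_tight:
  assumes T: "\<xi> \<in> tight_filters" and e: "sinv s * s \<in> \<xi>"
  shows "theta s \<xi> \<in> tight_filters"
proof -
  have F: "is_filter \<xi>" by (rule tight_filter[OF T])
  have Ft: "is_filter (theta s \<xi>)" by (rule theta_filter[OF F e])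
  have "\<exists>\<mu>\<in>ultrafilters. \<mu> \<in> W" if W: "openin filter_top W" "theta s \<xi> \<in> W" for W
  proof -
    obtain x N where x: "x \<in> theta s \<xi>" and N: "finite N" "N \<subseteq> idems" "N \<inter> theta s \<xi> = {}"
      and bx: "box x N \<subseteq> W" using nbhd[OF W] by blast
    have xi: "x \<in> idems" using filter_idems[OF Ft x] .
    have xx: "x * x = x" using xi unfolding idems_def by blast
    define x1 where "x1 = sinv s * x * s"
    define N1 where "N1 = (\<lambda>y. sinv s * y * s) ` N"
    have x1m: "x1 \<in> \<xi>" unfolding x1_def using theta_mem[OF Ft x, of "sinv s"] theta_inv[OF F e] by simp
    have x1i: "x1 \<in> idems" using filter_idems[OF F x1m] .
    have N1i: "N1 \<subseteq> idems" unfolding N1_def using N(2) conj_idem[of _ "sinv s"] unfolding idems_def by auto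
    have N1d: "N1 \<inter> \<xi> = {}"
    proof (rule ccontr)
      assume "N1 \<inter> \<xi> \<noteq> {}"
      then obtain y where y: "y \<in> N" "sinv s * y * s \<in> \<xi>" unfolding N1_def by blast
      have yy: "y * y = y" using y(1) N(2) unfolding idems_def by blast
      have "s * (sinv s * y * s) * sinv s \<in> theta s \<xi>" by (rule theta_mem[OF F y(2)])
      hence "y * (s * sinv s) \<in> theta s \<xi>" using conj2'[OF yy] by simp
      hence "y \<in> theta s \<xi>" using filter_prod_left[OF Ft] yy ssinv_idem N(2) y(1) unfolding idems_def by blast
      thus False using N(3) y(1) by blast
    qed
    have "openin filter_top (box x1 N1)" using box_open[OF x1i _ N1i] N(1) unfolding N1_def by blast
    moreover have "\<xi> \<in> box x1 N1" unfolding box_def using x1m N1d F filters_def by blast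
    ultimately obtain \<mu> where mu: "\<mu> \<in> ultrafilters" "\<mu> \<in> box x1 N1" using T in_tight by blast
    have Fm: "is_filter \<mu>" using mu unfolding ultrafilters_def filters_def by blast
    have x1mu: "x1 \<in> \<mu>" using mu unfolding box_def by blast
    have "idem_le x1 (sinv s * s)" unfolding x1_def idem_le_def by (simp add: mult.assoc sinv1' sinv1'')
    hence emu: "sinv s * s \<in> \<mu>" using filter_up[OF Fm x1mu] sinvs_idem unfolding idems_def by blast
    have U: "theta s \<mu> \<in> ultrafilters" by (rule theta_ultra[OF mu(1) emu])
    have Ftm: "is_filter (theta s \<mu>)" by (rule theta_filter[OF Fm emu])
    have "s * x1 * sinv s \<in> theta s \<mu>" by (rule theta_mem[OF Fm x1mu])
    hence "x * (s * sinv s) \<in> theta s \<mu>" unfolding x1_def using conj2'[OF xx] by simp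
    hence xm: "x \<in> theta s \<mu>" using filter_prod_left[OF Ftm] xi ssinv_idem unfolding idems_def by blast
    have "N \<inter> theta s \<mu> = {}"
    proof (rule ccontr)
      assume "N \<inter> theta s \<mu> \<noteq> {}"
      then obtain y where y: "y \<in> N" "y \<in> theta s \<mu>" by blast
      have "sinv s * y * sinv (sinv s) \<in> theta (sinv s) (theta s \<mu>)" by (rule theta_mem[OF Ftm y(2)])
      hence "sinv s * y * s \<in> \<mu>" using theta_inv[OF Fm emu] by simp
      thus False using mu(2) y(1) unfolding box_def N1_def by blast
    qed
    hence "theta s \<mu> \<in> box x N" unfolding box_def filters_def using xm Ftm by blast
    thus ?thesis using U bx by blast
  qed
  thus ?thesis using in_tight Ft filters_def by blast
qed

end


definition Dm :: "('a::{semigroup_mult,mult_zero} \<Rightarrow> 'g) \<Rightarrow> 'g \<Rightarrow> 'a set set" where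
  "Dm \<phi> g = {\<xi>. \<exists>s. s \<noteq> 0 \<and> \<phi> s = g \<and> s * sinv s \<in> \<xi>}"

lemma (in ISG) conj_eq:
  assumes "(s::'a) * x = t * x" "x * x = x"
  shows "s * x * sinv s = t * x * sinv t"
proof -
  have "s * x * sinv s = (s * x) * sinv (s * x)"
    using assms(2) by (simp add: sinv_mult sinv_idem mult.assoc idemL)
  also have "\<dots> = (t * x) * sinv (t * x)" using assms(1) by simp
  also have "\<dots> = t * x * sinv t"
    using assms(2) by (simp add: sinv_mult sinv_idem mult.assoc idemL)
  finally show ?thesis .
qed

locale PG = ISG ty for ty :: "'a::{semigroup_mult,mult_zero} itself" +
  fixes G :: "('g, 'b) monoid_scheme" and \<phi> :: "'a \<Rightarrow> 'g"
  assumes pg: "pure_grading G \<phi>"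
begin

lemma grp: "group G" using pg unfolding pure_grading_def by blast

sublocale grp: group G by (rule grp)

lemma phi_car: "(s::'a) \<noteq> 0 \<Longrightarrow> \<phi> s \<in> carrier G"
  using pg unfolding pure_grading_def by blast

lemma phi_mult: "(a::'a) * b \<noteq> 0 \<Longrightarrow> \<phi> (a * b) = \<phi> a \<otimes>\<^bsub>G\<^esub> \<phi> b"
  using pg unfolding pure_grading_def by (metis mult_zero_left mult_zero_right)

lemma phi_one_iff: "(s::'a) \<noteq> 0 \<Longrightarrow> \<phi> s = \<one>\<^bsub>G\<^esub> \<longleftrightarrow> s * s = s"
proof -
  assume s: "s \<noteq> 0"
  have "{s. s \<noteq> 0 \<and> \<phi> s = \<one>\<^bsub>G\<^esub>} = idems - {0::'a}" using pg unfolding pure_grading_def by blast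
  hence "s \<in> {s. s \<noteq> 0 \<and> \<phi> s = \<one>\<^bsub>G\<^esub>} \<longleftrightarrow> s \<in> idems - {0}" by simp
  thus ?thesis using s unfolding idems_def by simp
qed

lemma phi_sinv: "(s::'a) \<noteq> 0 \<Longrightarrow> \<phi> (sinv s) = inv\<^bsub>G\<^esub> (\<phi> s)"
proof -
  assume s: "s \<noteq> 0"
  have nz: "sinv s * s \<noteq> 0" using s sinv1''[of s] by (metis mult_zero_right)
  have "\<phi> (sinv s * s) = \<one>\<^bsub>G\<^esub>" using phi_one_iff[OF nz] sinvs_idem by simp
  hence "\<phi> (sinv s) \<otimes>\<^bsub>G\<^esub> \<phi> s = \<one>\<^bsub>G\<^esub>" using phi_mult[OF nz] by simp
  thus ?thesis using grp.inv_equality phi_car s sinv_nz by metis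
qed

lemma L2:
  assumes st: "\<phi> s = \<phi> t" and x0: "(x::'a) \<noteq> 0" and xx: "x * x = x"
    and xs: "idem_le x (sinv s * s)" and xt: "idem_le x (sinv t * t)"
  shows "s * x = t * x"
proof -
  have xs': "(sinv s * s) * x = x" using xs idem_comm[OF xx sinvs_idem] unfolding idem_le_def by simp
  have xt': "(sinv t * t) * x = x" using xt idem_comm[OF xx sinvs_idem] unfolding idem_le_def by simp
  define p where "p = s * x"
  define q where "q = t * x"
  define f where "f = s * x * sinv t"
  have p0: "p \<noteq> 0" unfolding p_def using xs' x0 by (metis mult.assoc mult_zero_right)
  have fq: "f * q = p" unfolding f_def q_def p_def using xt' xx by (simp add: mult.assoc)
  have f0: "f \<noteq> 0" using fq p0 by auto
  have s0: "s \<noteq> 0" using p0 unfolding p_def by auto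
  have t0: "t \<noteq> 0" using f0 unfolding f_def by auto
  have sx0: "s * x \<noteq> 0" using p0 p_def by simp
  have x1: "\<phi> x = \<one>\<^bsub>G\<^esub>" using phi_one_iff[OF x0] xx by simp
  have "\<phi> f = \<phi> (s * x) \<otimes>\<^bsub>G\<^esub> \<phi> (sinv t)" unfolding f_def using f0 f_def phi_mult by blast
  also have "\<dots> = \<phi> s \<otimes>\<^bsub>G\<^esub> inv\<^bsub>G\<^esub> (\<phi> t)" using phi_mult[OF sx0] x1 phi_sinv[OF t0] phi_car[OF s0] by simp
  also have "\<dots> = \<one>\<^bsub>G\<^esub>" using st phi_car[OF t0] by simp
  finally have ff: "f * f = f" using phi_one_iff[OF f0] by simp
  have sf: "sinv f = t * x * sinv s" unfolding f_def using xx by (simp add: sinv_mult sinv_idem mult.assoc)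
  have sff: "sinv f = f" using sinv_idem[OF ff] by simp
  have "f * p = (t * x * sinv s) * (s * x)" using sf sff unfolding p_def by simp
  also have "\<dots> = t * x * ((sinv s * s) * x)" by (simp add: mult.assoc)
  also have "\<dots> = t * (x * x)" using xs' by (simp add: mult.assoc)
  finally have fp: "f * p = q" unfolding q_def using xx by simp
  have "p = f * q" using fq by simp
  also have "\<dots> = f * (f * p)" using fp by simp
  also have "\<dots> = f * p" using ff by (simp add: mult.assoc[symmetric])
  also have "\<dots> = q" by (rule fp)
  finally show ?thesis unfolding p_def q_def .
qed

lemma theta_welldef1:
  assumes F: "is_filter \<xi>" and st: "\<phi> s = \<phi> t"
    and es: "sinv s * s \<in> \<xi>" and et: "sinv t * t \<in> \<xi>" and y: "y \<in> theta s \<xi>"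
  shows "y \<in> theta t \<xi>"
proof -
  obtain x where yi: "y \<in> idems" and x: "x \<in> \<xi>" and le: "idem_le (s * x * sinv s) y"
    using y unfolding theta_def by blast
  define e1 where "e1 = sinv s * s"
  define e2 where "e2 = sinv t * t"
  have e1i: "e1 * e1 = e1" and e2i: "e2 * e2 = e2" unfolding e1_def e2_def using sinvs_idem by auto
  have xx: "x * x = x" by (rule filter_idem[OF F x])
  define x' where "x' = x * (e1 * e2)"
  have x'm: "x' \<in> \<xi>" unfolding x'_def e1_def e2_def using F x es et by (simp add: filter_mult)
  have x'0: "x' \<noteq> 0" using filter_nz'[OF F x'm] .
  have e12: "(e1 * e2) * (e1 * e2) = e1 * e2" by (rule idem_prod[OF e1i e2i])
  have x'x': "x' * x' = x'" unfolding x'_def by (rule idem_prod[OF xx e12])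
  have c21: "e2 * e1 = e1 * e2" by (rule idem_comm[OF e2i e1i])
  have "x * (e1 * e2) * e1 = x * (e1 * (e2 * e1))" by (simp add: mult.assoc)
  also have "\<dots> = x * (e1 * e1 * e2)" using c21 by (simp add: mult.assoc)
  also have "\<dots> = x * (e1 * e2)" using e1i by simp
  finally have le1: "idem_le x' e1" unfolding x'_def idem_le_def .
  have le2: "idem_le x' e2" unfolding x'_def idem_le_def by (simp add: mult.assoc e2i)
  have lex: "idem_le x' x" unfolding x'_def by (rule idem_le_prod1[OF xx e12])
  have eq: "s * x' = t * x'" by (rule L2[OF st x'0 x'x' le1[unfolded e1_def] le2[unfolded e2_def]])
  have "t * x' * sinv t = s * x' * sinv s" using conj_eq[OF eq x'x'] by simp
  moreover have "idem_le (s * x' * sinv s) (s * x * sinv s)" by (rule conj_mono[OF x'x' xx lex])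
  ultimately have "idem_le (t * x' * sinv t) y" using le idem_le_trans by simp
  thus ?thesis using yi x'm theta_memI by blast
qed

lemma theta_welldef:
  assumes F: "is_filter \<xi>" and st: "\<phi> s = \<phi> t"
    and es: "sinv s * s \<in> \<xi>" and et: "sinv t * t \<in> \<xi>"
  shows "theta s \<xi> = theta t \<xi>"
  using theta_welldef1[OF F st es et] theta_welldef1[OF F st[symmetric] et es] by blast

definition Th :: "'g \<Rightarrow> 'a set \<Rightarrow> 'a set" where
  "Th k \<xi> = theta (SOME u. u \<noteq> 0 \<and> \<phi> u = k \<and> sinv u * u \<in> \<xi>) \<xi>"

lemma Th_eq:
  assumes F: "is_filter \<xi>" and u: "\<phi> u = k" "sinv u * u \<in> \<xi>"
  shows "Th k \<xi> = theta u \<xi>"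
proof -
  have u0: "u \<noteq> 0"
  proof
    assume "u = 0" hence "0 \<in> \<xi>" using u(2) by simp
    thus False using filter_nz[OF F] by simp
  qed
  have ex: "\<exists>u. u \<noteq> 0 \<and> \<phi> u = k \<and> sinv u * u \<in> \<xi>" using u u0 by blast
  define v where "v = (SOME u. u \<noteq> 0 \<and> \<phi> u = k \<and> sinv u * u \<in> \<xi>)"
  have v: "v \<noteq> 0 \<and> \<phi> v = k \<and> sinv v * v \<in> \<xi>" unfolding v_def by (rule someI_ex[OF ex])
  have "Th k \<xi> = theta v \<xi>" unfolding Th_def v_def ..
  also have "\<dots> = theta u \<xi>"
  proof (rule theta_welldef[OF F _ _ u(2)])
    show "\<phi> v = \<phi> u" using v u(1) by simp
    show "sinv v * v \<in> \<xi>" using v by simp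
  qed
  finally show ?thesis .
qed

end


context ISG begin
lemma conj_le: "(x::'a) * x = x \<Longrightarrow> idem_le (t * x * sinv t) (t * sinv t)"
  unfolding idem_le_def by (simp add: mult.assoc sinv2'')
end

context PG begin

lemma phig_zero: "phig \<phi> g (0::'a) = 0"
  unfolding phig_def Let_def by simp

lemma phig_idem: "(x::'a) * x = x \<Longrightarrow> phig \<phi> g x * phig \<phi> g x = phig \<phi> g x"
  unfolding phig_def Let_def by (rule conj_idem)

lemma phig_eq:
  assumes x0: "(x::'a) \<noteq> 0" and xx: "x * x = x" and s: "\<phi> s = g" "idem_le x (sinv s * s)"
  shows "phig \<phi> g x = s * x * sinv s"
proof -
  have s0: "s \<noteq> 0" using s(2) x0 unfolding idem_le_def by auto
  have ex: "\<exists>t. t \<noteq> 0 \<and> \<phi> t = g \<and> idem_le x (sinv t * t)" using s s0 by blast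
  define t where "t = (SOME t. t \<noteq> 0 \<and> \<phi> t = g \<and> idem_le x (sinv t * t))"
  have t: "t \<noteq> 0 \<and> \<phi> t = g \<and> idem_le x (sinv t * t)" unfolding t_def by (rule someI_ex[OF ex])
  have "phig \<phi> g x = t * x * sinv t" unfolding phig_def Let_def t_def ..
  also have "\<dots> = s * x * sinv s"
  proof (rule conj_eq[OF _ xx])
    show "t * x = s * x" by (rule L2) (use t s x0 xx in auto)
  qed
  finally show ?thesis .
qed

lemma Eg_idems: "Eg \<phi> g \<subseteq> idems"
  unfolding Eg_def by auto

lemma Eg_nz:
  assumes "x \<in> Eg \<phi> g" "(x::'a) \<noteq> 0"
  shows "x \<in> idems \<and> (\<exists>s. s \<noteq> 0 \<and> \<phi> s = g \<and> idem_le x (s * sinv s))"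
  using assms unfolding Eg_def by (auto split: if_splits)

lemma Eg_mem:
  assumes "(x::'a) \<in> idems" "s \<noteq> 0" "\<phi> s = g" "idem_le x (s * sinv s)"
  shows "x \<in> Eg \<phi> g"
  using assms unfolding Eg_def by auto

lemma hatphi_memI:
  "x \<in> Eg \<phi> (inv\<^bsub>G\<^esub> g) \<Longrightarrow> finite Xs \<Longrightarrow> Xs \<subseteq> Eg \<phi> (inv\<^bsub>G\<^esub> g) \<Longrightarrow> Vset x Xs \<subseteq> U
   \<Longrightarrow> \<xi> \<in> Vset (phig \<phi> g x) (phig \<phi> g ` Xs) \<Longrightarrow> \<xi> \<in> hatphi G \<phi> g U"
  unfolding hatphi_def by blast

lemma hatphi_memE:
  "\<xi> \<in> hatphi G \<phi> g U \<Longrightarrow> \<exists>x Xs. x \<in> Eg \<phi> (inv\<^bsub>G\<^esub> g) \<and> finite Xs \<and> Xs \<subseteq> Eg \<phi> (inv\<^bsub>G\<^esub> g) \<and> Vset x Xs \<subseteq> U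
   \<and> \<xi> \<in> Vset (phig \<phi> g x) (phig \<phi> g ` Xs)"
  unfolding hatphi_def by blast

lemma hatphi_open: "openin tight_top (hatphi G \<phi> g U)"
proof -
  have "openin tight_top (Vset (phig \<phi> g x) (phig \<phi> g ` Xs))"
    if "x \<in> Eg \<phi> (inv\<^bsub>G\<^esub> g)" "finite Xs" "Xs \<subseteq> Eg \<phi> (inv\<^bsub>G\<^esub> g)" for x Xs
  proof (rule Vset_open)
    show "phig \<phi> g x \<in> idems" using that Eg_idems phig_idem unfolding idems_def by blast
    show "finite (phig \<phi> g ` Xs)" using that by simp
    show "phig \<phi> g ` Xs \<subseteq> idems" using that Eg_idems phig_idem unfolding idems_def by blast
  qed
  thus ?thesis unfolding hatphi_def by (intro openin_Union) blast
qed

lemma hatphi_char: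
  assumes g: "g \<in> carrier G" and U: "openin tight_top U"
  shows "\<xi> \<in> hatphi G \<phi> g U \<longleftrightarrow> \<xi> \<in> tight_filters \<and> \<xi> \<in> Dm \<phi> g \<and> Th (inv\<^bsub>G\<^esub> g) \<xi> \<in> U"
proof
  assume "\<xi> \<in> hatphi G \<phi> g U"
  then obtain x Xs where x: "x \<in> Eg \<phi> (inv\<^bsub>G\<^esub> g)" and Xs: "finite Xs" "Xs \<subseteq> Eg \<phi> (inv\<^bsub>G\<^esub> g)"
    and VU: "Vset x Xs \<subseteq> U" and xiV: "\<xi> \<in> Vset (phig \<phi> g x) (phig \<phi> g ` Xs)"
    using hatphi_memE by blast
  have T: "\<xi> \<in> tight_filters" and px: "phig \<phi> g x \<in> \<xi>" and py: "\<And>y. y \<in> Xs \<Longrightarrow> phig \<phi> g y \<notin> \<xi>"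
    using xiV unfolding Vset_def by auto
  have F: "is_filter \<xi>" by (rule tight_filter[OF T])
  have x0: "x \<noteq> 0" using px phig_zero filter_nz[OF F] by metis
  obtain s0 where xi: "x \<in> idems" and s0: "s0 \<noteq> 0" "\<phi> s0 = inv\<^bsub>G\<^esub> g" "idem_le x (s0 * sinv s0)"
    using Eg_nz[OF x x0] by blast
  have xx: "x * x = x" using xi unfolding idems_def by blast
  define t where "t = sinv s0"
  have t0: "t \<noteq> 0" unfolding t_def using sinv_nz[OF s0(1)] .
  have tg: "\<phi> t = g" unfolding t_def using phi_sinv[OF s0(1)] s0(2) g by simp
  have xt: "idem_le x (sinv t * t)" unfolding t_def using s0(3) by simp
  have pxe: "phig \<phi> g x = t * x * sinv t" by (rule phig_eq[OF x0 xx tg xt])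
  have ttm: "t * sinv t \<in> \<xi>"
    using filter_up[OF F px[unfolded pxe] _ conj_le[OF xx]] ssinv_idem unfolding idems_def by blast
  have Dmg: "\<xi> \<in> Dm \<phi> g" unfolding Dm_def using t0 tg ttm by blast
  have ttm': "sinv (sinv t) * sinv t \<in> \<xi>" using ttm by simp
  have Theq: "Th (inv\<^bsub>G\<^esub> g) \<xi> = theta (sinv t) \<xi>"
    by (rule Th_eq[OF F _ ttm']) (use phi_sinv[OF t0] tg in simp)
  define \<eta> where "\<eta> = theta (sinv t) \<xi>"
  have eT: "\<eta> \<in> tight_filters" unfolding \<eta>_def by (rule theta_tight[OF T ttm'])
  have eF: "is_filter \<eta>" by (rule tight_filter[OF eT])
  have "sinv t * (t * x * sinv t) * sinv (sinv t) \<in> \<eta>" unfolding \<eta>_def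
    by (rule theta_mem[OF F px[unfolded pxe]])
  hence xe: "x \<in> \<eta>" using conj2[OF xx, of t] xt unfolding idem_le_def by simp
  have ette: "sinv t * t \<in> \<eta>" using filter_up[OF eF xe _ xt] sinvs_idem unfolding idems_def by blast
  have bk: "theta t \<eta> = \<xi>" unfolding \<eta>_def by (rule theta_inv'[OF F ttm])
  have "y \<notin> \<eta>" if y: "y \<in> Xs" for y
  proof
    assume ye: "y \<in> \<eta>"
    have y0: "y \<noteq> 0" using ye filter_nz[OF eF] by blast
    have yE: "y \<in> Eg \<phi> (inv\<^bsub>G\<^esub> g)" using y Xs(2) by blast
    obtain s1 where yi: "y \<in> idems" and s1: "s1 \<noteq> 0" "\<phi> s1 = inv\<^bsub>G\<^esub> g" "idem_le y (s1 * sinv s1)"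
      using Eg_nz[OF yE y0] by blast
    have yy: "y * y = y" using yi unfolding idems_def by blast
    define t1 where "t1 = sinv s1"
    have t1g: "\<phi> t1 = g" unfolding t1_def using phi_sinv[OF s1(1)] s1(2) g by simp
    have yt1: "idem_le y (sinv t1 * t1)" unfolding t1_def using s1(3) by simp
    have pye: "phig \<phi> g y = t1 * y * sinv t1" by (rule phig_eq[OF y0 yy t1g yt1])
    define y' where "y' = y * (sinv t * t)"
    have y'e: "y' \<in> \<eta>" unfolding y'_def by (rule filter_mult[OF eF ye ette])
    have y'0: "y' \<noteq> 0" using y'e filter_nz[OF eF] by blast
    have y'y': "y' * y' = y'" unfolding y'_def by (rule idem_prod[OF yy sinvs_idem])
    have y'le: "idem_le y' y" unfolding y'_def by (rule idem_le_prod1[OF yy sinvs_idem])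
    have y't: "idem_le y' (sinv t * t)" unfolding y'_def by (rule idem_le_prod2[OF yy sinvs_idem])
    have y't1: "idem_le y' (sinv t1 * t1)" using idem_le_trans[OF y'le yt1] .
    have eq: "t * y' = t1 * y'" by (rule L2) (use tg t1g y'0 y'y' y't y't1 in auto)
    have "t * y' * sinv t \<in> \<xi>" using theta_mem[OF eF y'e, of t] bk by simp
    hence "t1 * y' * sinv t1 \<in> \<xi>" using conj_eq[OF eq y'y'] by simp
    moreover have "idem_le (t1 * y' * sinv t1) (t1 * y * sinv t1)" by (rule conj_mono[OF y'y' yy y'le])
    ultimately have "phig \<phi> g y \<in> \<xi>" unfolding pye
      using filter_up[OF F] conj_idem[OF yy] unfolding idems_def by blast
    thus False using py[OF y] by simp
  qed
  hence "\<eta> \<in> Vset x Xs" unfolding Vset_def using eT xe by blast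
  hence "Th (inv\<^bsub>G\<^esub> g) \<xi> \<in> U" using VU Theq \<eta>_def by auto
  thus "\<xi> \<in> tight_filters \<and> \<xi> \<in> Dm \<phi> g \<and> Th (inv\<^bsub>G\<^esub> g) \<xi> \<in> U" using T Dmg by blast
next
  assume "\<xi> \<in> tight_filters \<and> \<xi> \<in> Dm \<phi> g \<and> Th (inv\<^bsub>G\<^esub> g) \<xi> \<in> U"
  hence T: "\<xi> \<in> tight_filters" and D: "\<xi> \<in> Dm \<phi> g" and ThU: "Th (inv\<^bsub>G\<^esub> g) \<xi> \<in> U" by auto
  have F: "is_filter \<xi>" by (rule tight_filter[OF T])
  obtain s where s: "s \<noteq> 0" "\<phi> s = g" "s * sinv s \<in> \<xi>" using D unfolding Dm_def by blast
  have ssm': "sinv (sinv s) * sinv s \<in> \<xi>" using s(3) by simp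
  define \<eta> where "\<eta> = theta (sinv s) \<xi>"
  have Theq: "Th (inv\<^bsub>G\<^esub> g) \<xi> = \<eta>" unfolding \<eta>_def
    by (rule Th_eq[OF F _ ssm']) (use phi_sinv[OF s(1)] s(2) in simp)
  have eT: "\<eta> \<in> tight_filters" unfolding \<eta>_def by (rule theta_tight[OF T ssm'])
  have eF: "is_filter \<eta>" by (rule tight_filter[OF eT])
  have eU: "\<eta> \<in> U" using ThU Theq by simp
  obtain W where W: "openin filter_top W" "U = W \<inter> tight_filters"
    using U unfolding tight_top_def openin_subtopology by blast
  have eW: "\<eta> \<in> W" using eU W by blast
  obtain x0 N where x0: "x0 \<in> \<eta>" and N: "finite N" "N \<subseteq> idems" "N \<inter> \<eta> = {}" and bx: "box x0 N \<subseteq> W"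
    using nbhd[OF W(1) eW] by blast
  have x0i: "x0 \<in> idems" using filter_idems[OF eF x0] .
  define e where "e = sinv s * s"
  have ei: "e * e = e" unfolding e_def by (rule sinvs_idem)
  have ee: "e \<in> \<eta>" unfolding \<eta>_def e_def using theta_ss[OF F ssm'] by simp
  define x' where "x' = x0 * e"
  have x'e: "x' \<in> \<eta>" unfolding x'_def by (rule filter_mult[OF eF x0 ee])
  have x'0: "x' \<noteq> 0" using x'e filter_nz[OF eF] by blast
  have x0x0: "x0 * x0 = x0" using x0i unfolding idems_def by blast
  have x'x': "x' * x' = x'" unfolding x'_def by (rule idem_prod[OF x0x0 ei])
  have x'le: "idem_le x' e" unfolding x'_def by (rule idem_le_prod2[OF x0x0 ei])
  have ssinv0: "sinv s \<noteq> 0" by (rule sinv_nz[OF s(1)])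
  have phs: "\<phi> (sinv s) = inv\<^bsub>G\<^esub> g" using phi_sinv[OF s(1)] s(2) by simp
  have x'E: "x' \<in> Eg \<phi> (inv\<^bsub>G\<^esub> g)"
    by (rule Eg_mem[OF _ ssinv0 phs]) (use x'x' x'le e_def idems_def in auto)
  define Xs where "Xs = (\<lambda>y. y * x') ` N"
  have XsE: "Xs \<subseteq> Eg \<phi> (inv\<^bsub>G\<^esub> g)"
  proof
    fix z assume "z \<in> Xs"
    then obtain y where y: "y \<in> N" "z = y * x'" unfolding Xs_def by blast
    have yy: "y * y = y" using y(1) N(2) unfolding idems_def by blast
    have zi: "z * z = z" unfolding y(2) by (rule idem_prod[OF yy x'x'])
    have "idem_le z e" unfolding y(2) using idem_le_trans[OF idem_le_prod2[OF yy x'x'] x'le] .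
    thus "z \<in> Eg \<phi> (inv\<^bsub>G\<^esub> g)" by (intro Eg_mem[OF _ ssinv0 phs]) (use zi e_def idems_def in auto)
  qed
  have Xsf: "finite Xs" unfolding Xs_def using N(1) by simp
  have VU: "Vset x' Xs \<subseteq> U"
  proof
    fix \<zeta> assume z: "\<zeta> \<in> Vset x' Xs"
    hence zT: "\<zeta> \<in> tight_filters" and x'z: "x' \<in> \<zeta>" and nz: "\<And>w. w \<in> Xs \<Longrightarrow> w \<notin> \<zeta>"
      unfolding Vset_def by auto
    have zF: "is_filter \<zeta>" by (rule tight_filter[OF zT])
    have "x0 \<in> \<zeta>" using filter_prod_left[OF zF x'z[unfolded x'_def] x0i] ei unfolding idems_def by blast
    moreover have "N \<inter> \<zeta> = {}"
    proof (rule ccontr)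
      assume "N \<inter> \<zeta> \<noteq> {}"
      then obtain y where "y \<in> N" "y \<in> \<zeta>" by blast
      hence "y * x' \<in> \<zeta>" "y * x' \<in> Xs" using filter_mult[OF zF _ x'z] unfolding Xs_def by auto
      thus False using nz by blast
    qed
    ultimately have "\<zeta> \<in> box x0 N" unfolding box_def filters_def using zF by blast
    thus "\<zeta> \<in> U" using bx W zT by blast
  qed
  have bk: "theta s \<eta> = \<xi>" unfolding \<eta>_def by (rule theta_inv'[OF F s(3)])
  have px': "phig \<phi> g x' = s * x' * sinv s" by (rule phig_eq[OF x'0 x'x' s(2) x'le[unfolded e_def]])
  have pxm: "phig \<phi> g x' \<in> \<xi>" unfolding px' using theta_mem[OF eF x'e, of s] bk by simp
  have "phig \<phi> g z \<notin> \<xi>" if z: "z \<in> Xs" for z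
  proof
    assume pz: "phig \<phi> g z \<in> \<xi>"
    obtain y where y: "y \<in> N" "z = y * x'" using z unfolding Xs_def by blast
    have yy: "y * y = y" using y(1) N(2) unfolding idems_def by blast
    have zz: "z * z = z" unfolding y(2) by (rule idem_prod[OF yy x'x'])
    have zle: "idem_le z e" unfolding y(2) using idem_le_trans[OF idem_le_prod2[OF yy x'x'] x'le] .
    have z0: "z \<noteq> 0" using pz phig_zero filter_nz[OF F] by metis
    have pze: "phig \<phi> g z = s * z * sinv s" by (rule phig_eq[OF z0 zz s(2) zle[unfolded e_def]])
    have "sinv s * (s * z * sinv s) * sinv (sinv s) \<in> \<eta>" unfolding \<eta>_def
      by (rule theta_mem[OF F pz[unfolded pze]])
    hence "z * (sinv s * s) \<in> \<eta>" using conj2[OF zz, of s] by simp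
    hence "z \<in> \<eta>" using zle unfolding idem_le_def e_def by simp
    hence "y \<in> \<eta>" using filter_prod_left[OF eF _ _ ] y N(2) x'x' unfolding idems_def by blast
    thus False using y(1) N(3) by blast
  qed
  hence "\<xi> \<in> Vset (phig \<phi> g x') (phig \<phi> g ` Xs)" unfolding Vset_def using T pxm by blast
  thus "\<xi> \<in> hatphi G \<phi> g U" by (rule hatphi_memI[OF x'E Xsf XsE VU])
qed

end


context PG begin

lemma Tcg_sub: "U \<in> Tcg \<phi> g \<Longrightarrow> U \<subseteq> tight_filters \<inter> Dm \<phi> g"
proof
  fix \<xi> assume U: "U \<in> Tcg \<phi> g" and xi: "\<xi> \<in> U"
  then obtain x where x: "x \<in> Eg \<phi> g" "\<xi> \<in> Vset x {}" unfolding Tcg_def by blast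
  hence T: "\<xi> \<in> tight_filters" and xm: "x \<in> \<xi>" unfolding Vset_def by auto
  have F: "is_filter \<xi>" by (rule tight_filter[OF T])
  have x0: "x \<noteq> 0" using xm filter_nz[OF F] by blast
  obtain s where s: "s \<noteq> 0" "\<phi> s = g" "idem_le x (s * sinv s)" using Eg_nz[OF x(1) x0] by blast
  have "s * sinv s \<in> \<xi>" using filter_up[OF F xm _ s(3)] ssinv_idem unfolding idems_def by blast
  thus "\<xi> \<in> tight_filters \<inter> Dm \<phi> g" unfolding Dm_def using T s by blast
qed

lemma Tcg_open: "U \<in> Tcg \<phi> g \<Longrightarrow> openin tight_top U"
  unfolding Tcg_def Tc_def by blast

lemma carrier_nz:
  assumes a: "a \<in> skew_carrier G \<phi>" and nz: "a g \<xi> \<noteq> 0"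
  shows "g \<in> carrier G \<and> \<xi> \<in> tight_filters \<and> \<xi> \<in> Dm \<phi> g"
proof -
  have "a g \<noteq> (\<lambda>_. 0)" using nz by auto
  hence g: "g \<in> carrier G" using a unfolding skew_carrier_def by blast
  hence "a g \<in> Lc (Tcg \<phi> g)" using a unfolding skew_carrier_def by blast
  hence "{\<eta>. a g \<eta> = a g \<xi>} \<in> Tcg \<phi> g" using nz unfolding Lc_def by blast
  hence "{\<eta>. a g \<eta> = a g \<xi>} \<subseteq> tight_filters \<inter> Dm \<phi> g" by (rule Tcg_sub)
  thus ?thesis using g by blast
qed

lemma carrier_Lc:
  assumes a: "a \<in> skew_carrier G \<phi>" and g: "g \<in> carrier G"
  shows "finite (range (a g))" "\<And>r. r \<noteq> 0 \<Longrightarrow> {\<xi>. a g \<xi> = r} \<in> Tcg \<phi> g"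
  using a g unfolding skew_carrier_def Lc_def by blast+

lemma carrier_open:
  assumes a: "a \<in> skew_carrier G \<phi>" and r: "r \<noteq> 0"
  shows "openin tight_top {\<xi>. a g \<xi> = r}"
proof (cases "g \<in> carrier G")
  case True
  thus ?thesis using carrier_Lc(2)[OF a True r] Tcg_open by blast
next
  case False
  hence "{\<xi>. a g \<xi> = r} = {}" using carrier_nz[OF a] r by fastforce
  thus ?thesis by simp
qed

lemma Th_props:
  assumes k: "k \<in> carrier G" and T: "\<xi> \<in> tight_filters" and D: "\<xi> \<in> Dm \<phi> k"
  shows "Th (inv\<^bsub>G\<^esub> k) \<xi> \<in> tight_filters" "Th (inv\<^bsub>G\<^esub> k) \<xi> \<in> Dm \<phi> (inv\<^bsub>G\<^esub> k)"
    "Th k (Th (inv\<^bsub>G\<^esub> k) \<xi>) = \<xi>"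
proof -
  have F: "is_filter \<xi>" by (rule tight_filter[OF T])
  obtain s where s: "s \<noteq> 0" "\<phi> s = k" "s * sinv s \<in> \<xi>" using D unfolding Dm_def by blast
  have ssm': "sinv (sinv s) * sinv s \<in> \<xi>" using s(3) by simp
  have Theq: "Th (inv\<^bsub>G\<^esub> k) \<xi> = theta (sinv s) \<xi>"
    by (rule Th_eq[OF F _ ssm']) (use phi_sinv[OF s(1)] s(2) in simp)
  show T': "Th (inv\<^bsub>G\<^esub> k) \<xi> \<in> tight_filters" unfolding Theq by (rule theta_tight[OF T ssm'])
  have eF: "is_filter (theta (sinv s) \<xi>)" by (rule theta_filter[OF F ssm'])
  have ee: "sinv s * s \<in> theta (sinv s) \<xi>" using theta_ss[OF F ssm'] by simp
  show "Th (inv\<^bsub>G\<^esub> k) \<xi> \<in> Dm \<phi> (inv\<^bsub>G\<^esub> k)" unfolding Theq Dm_def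
    using sinv_nz[OF s(1)] phi_sinv[OF s(1)] s(2) ee by (intro CollectI exI[of _ "sinv s"]) simp
  have "Th k (theta (sinv s) \<xi>) = theta s (theta (sinv s) \<xi>)" by (rule Th_eq[OF eF s(2) ee])
  also have "\<dots> = \<xi>" by (rule theta_inv'[OF F s(3)])
  finally show "Th k (Th (inv\<^bsub>G\<^esub> k) \<xi>) = \<xi>" unfolding Theq .
qed

lemma tildephi_eq:
  assumes k: "k \<in> carrier G" and fin: "finite (range h)"
    and lv: "\<And>r. r \<noteq> 0 \<Longrightarrow> openin tight_top {\<eta>. h \<eta> = r}"
  shows "tildephi G \<phi> k h \<xi> = (if \<xi> \<in> tight_filters \<and> \<xi> \<in> Dm \<phi> k then h (Th (inv\<^bsub>G\<^esub> k) \<xi>) else 0)"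
proof -
  define C where "C = (\<xi> \<in> tight_filters \<and> \<xi> \<in> Dm \<phi> k)"
  define R where "R = range h - {0}"
  have Rf: "finite R" unfolding R_def using fin by simp
  have mem: "\<xi> \<in> hatphi G \<phi> k {\<eta>. h \<eta> = r} \<longleftrightarrow> C \<and> h (Th (inv\<^bsub>G\<^esub> k) \<xi>) = r" if "r \<in> R" for r
    using hatphi_char[OF k lv] that unfolding R_def C_def by auto
  have "tildephi G \<phi> k h \<xi> = (\<Sum>r\<in>R. if C \<and> h (Th (inv\<^bsub>G\<^esub> k) \<xi>) = r then r else 0)"
    unfolding tildephi_def R_def[symmetric] using mem by (intro sum.cong) auto
  also have "\<dots> = (if C then h (Th (inv\<^bsub>G\<^esub> k) \<xi>) else 0)"
  proof (cases C)
    case True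
    have "(\<Sum>r\<in>R. if C \<and> h (Th (inv\<^bsub>G\<^esub> k) \<xi>) = r then r else 0)
        = (\<Sum>r\<in>R. if h (Th (inv\<^bsub>G\<^esub> k) \<xi>) = r then r else 0)" using True by simp
    also have "\<dots> = (if h (Th (inv\<^bsub>G\<^esub> k) \<xi>) \<in> R then h (Th (inv\<^bsub>G\<^esub> k) \<xi>) else 0)"
      using sum.delta'[OF Rf, of "h (Th (inv\<^bsub>G\<^esub> k) \<xi>)" "\<lambda>r. r"] by simp
    also have "\<dots> = h (Th (inv\<^bsub>G\<^esub> k) \<xi>)" unfolding R_def by auto
    finally show ?thesis using True by simp
  qed simp
  finally show ?thesis unfolding C_def .
qed

lemma MF:
  assumes a: "a \<in> skew_carrier G \<phi>" and b: "b \<in> skew_carrier G \<phi>"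
  shows "skew_mult G \<phi> a b u \<xi> = (\<Sum>(s, t) \<in> {(s, t). a s \<noteq> (\<lambda>_. 0) \<and> b t \<noteq> (\<lambda>_. 0) \<and> s \<otimes>\<^bsub>G\<^esub> t = u}.
       a s \<xi> * b t (Th (inv\<^bsub>G\<^esub> s) \<xi>))"
  unfolding skew_mult_def
proof (intro sum.cong refl, clarify)
  fix s t assume as: "a s \<noteq> (\<lambda>_. 0)" and bt: "b t \<noteq> (\<lambda>_. 0)"
  have s: "s \<in> carrier G" using as a unfolding skew_carrier_def by blast
  have t: "t \<in> carrier G" using bt b unfolding skew_carrier_def by blast
  have isc: "inv\<^bsub>G\<^esub> s \<in> carrier G" using s by simp
  define A where "A = tildephi G \<phi> (inv\<^bsub>G\<^esub> s) (a s)"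
  have Aeq: "A \<eta> = (if \<eta> \<in> tight_filters \<and> \<eta> \<in> Dm \<phi> (inv\<^bsub>G\<^esub> s) then a s (Th s \<eta>) else 0)" for \<eta>
    unfolding A_def using tildephi_eq[OF isc carrier_Lc(1)[OF a s] carrier_open[OF a]] s by simp
  have Alev: "{\<eta>. A \<eta> = p} = hatphi G \<phi> (inv\<^bsub>G\<^esub> s) {\<eta>. a s \<eta> = p}" if p: "p \<noteq> 0" for p
    using hatphi_char[OF isc carrier_open[OF a p]] Aeq p s by auto
  define Fn where "Fn = (\<lambda>\<eta>. A \<eta> * b t \<eta>)"
  have rA: "range A \<subseteq> insert 0 (range (a s))" using Aeq by auto
  have finA: "finite (range A)" using finite_subset[OF rA] carrier_Lc(1)[OF a s] by simp
  have "range Fn \<subseteq> (\<lambda>(p, q). p * q) ` (range A \<times> range (b t))" unfolding Fn_def by auto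
  hence finF: "finite (range Fn)" using finite_subset finA carrier_Lc(1)[OF b t] by blast
  have levF: "openin tight_top {\<eta>. Fn \<eta> = r}" if r: "r \<noteq> 0" for r
  proof -
    have "{\<eta>. Fn \<eta> = r} = \<Union>{{\<eta>. A \<eta> = p} \<inter> {\<eta>. b t \<eta> = q} | p q. p \<noteq> 0 \<and> q \<noteq> 0 \<and> p * q = r}"
    proof (rule equalityI[OF subsetI])
      fix x assume "x \<in> {\<eta>. Fn \<eta> = r}"
      hence x: "A x * b t x = r" unfolding Fn_def by simp
      hence "A x \<noteq> 0" "b t x \<noteq> 0" using r by auto
      thus "x \<in> \<Union>{{\<eta>. A \<eta> = p} \<inter> {\<eta>. b t \<eta> = q} | p q. p \<noteq> 0 \<and> q \<noteq> 0 \<and> p * q = r}"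
        using x by blast
    qed (auto simp: Fn_def)
    moreover have "openin tight_top ({\<eta>. A \<eta> = p} \<inter> {\<eta>. b t \<eta> = q})" if "p \<noteq> 0" "q \<noteq> 0" for p q
      using Alev[OF that(1)] hatphi_open carrier_open[OF b that(2)] by (simp add: openin_Int)
    ultimately show ?thesis by (auto intro!: openin_Union)
  qed
  have "tildephi G \<phi> s Fn \<xi> = (if \<xi> \<in> tight_filters \<and> \<xi> \<in> Dm \<phi> s then Fn (Th (inv\<^bsub>G\<^esub> s) \<xi>) else 0)"
    by (rule tildephi_eq[OF s finF levF])
  also have "\<dots> = a s \<xi> * b t (Th (inv\<^bsub>G\<^esub> s) \<xi>)"
  proof (cases "\<xi> \<in> tight_filters \<and> \<xi> \<in> Dm \<phi> s")
    case True
    have "A (Th (inv\<^bsub>G\<^esub> s) \<xi>) = a s \<xi>" using Aeq Th_props[OF s] True by simp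
    thus ?thesis using True unfolding Fn_def by simp
  next
    case False
    hence "a s \<xi> = 0" using carrier_nz[OF a] by blast
    thus ?thesis using False by (simp only: if_False mult_zero_left)
  qed
  finally show "tildephi G \<phi> s (\<lambda>\<eta>. tildephi G \<phi> (inv\<^bsub>G\<^esub> s) (a s) \<eta> * b t \<eta>) \<xi> = a s \<xi> * b t (Th (inv\<^bsub>G\<^esub> s) \<xi>)"
    unfolding Fn_def A_def .
qed

end


definition cg :: "('a::{semigroup_mult,mult_zero} \<Rightarrow> 'g1) \<Rightarrow> ('a \<Rightarrow> 'g2) \<Rightarrow> 'g1 \<Rightarrow> 'a set \<Rightarrow> 'g2" where
  "cg \<phi> \<psi> g \<xi> = \<psi> (SOME s. s \<noteq> 0 \<and> \<phi> s = g \<and> s * sinv s \<in> \<xi>)"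

locale TWO = ISG ty for ty :: "'a::{semigroup_mult,mult_zero} itself" +
  fixes G1 :: "('g1, 'b1) monoid_scheme" and \<phi>1 :: "'a \<Rightarrow> 'g1"
    and G2 :: "('g2, 'b2) monoid_scheme" and \<phi>2 :: "'a \<Rightarrow> 'g2"
  assumes pg1: "pure_grading G1 \<phi>1" and pg2: "pure_grading G2 \<phi>2"
begin

sublocale P1: PG ty G1 \<phi>1 by unfold_locales (rule pg1)
sublocale P2: PG ty G2 \<phi>2 by unfold_locales (rule pg2)

lemma L1:
  assumes s0: "(s::'a) \<noteq> 0" and t0: "t \<noteq> 0" and st: "\<phi>1 s = \<phi>1 t"
    and e0: "s * sinv s * (t * sinv t) \<noteq> 0"
  shows "\<phi>2 s = \<phi>2 t"
proof -
  define e where "e = s * sinv s * (t * sinv t)"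
  have ee: "e * e = e" unfolding e_def by (rule idem_prod[OF ssinv_idem ssinv_idem])
  have e0': "e \<noteq> 0" using e0 e_def by simp
  define w where "w = sinv s * e * t"
  have "s * w * sinv t = (s * sinv s) * e * (t * sinv t)" unfolding w_def by (simp add: mult.assoc)
  also have "\<dots> = e" unfolding e_def by (simp add: mult.assoc idemL[OF ssinv_idem] sinv1' sinv2'')
  finally have swt: "s * w * sinv t = e" .
  have swt0: "s * w * sinv t \<noteq> 0" using swt e0' by simp
  have sw0: "s * w \<noteq> 0" using swt0 by auto
  have w0: "w \<noteq> 0" using sw0 by auto
  have se0: "sinv s * e \<noteq> 0" using w0 unfolding w_def by auto
  have g1s: "\<phi>1 s \<in> carrier G1" by (rule P1.phi_car[OF s0])
  have "\<phi>1 w = \<phi>1 (sinv s * e) \<otimes>\<^bsub>G1\<^esub> \<phi>1 t" unfolding w_def using P1.phi_mult w0 w_def by blast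
  also have "\<dots> = inv\<^bsub>G1\<^esub> (\<phi>1 s) \<otimes>\<^bsub>G1\<^esub> \<one>\<^bsub>G1\<^esub> \<otimes>\<^bsub>G1\<^esub> \<phi>1 t"
    using P1.phi_mult[OF se0] P1.phi_sinv[OF s0] P1.phi_one_iff[OF e0'] ee by simp
  also have "\<dots> = \<one>\<^bsub>G1\<^esub>" using st g1s by simp
  finally have ww: "w * w = w" using P1.phi_one_iff[OF w0] by simp
  have w1: "\<phi>2 w = \<one>\<^bsub>G2\<^esub>" using P2.phi_one_iff[OF w0] ww by simp
  have "\<one>\<^bsub>G2\<^esub> = \<phi>2 e" using P2.phi_one_iff[OF e0'] ee by simp
  also have "\<dots> = \<phi>2 (s * w) \<otimes>\<^bsub>G2\<^esub> \<phi>2 (sinv t)" using P2.phi_mult swt0 swt by metis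
  also have "\<dots> = \<phi>2 s \<otimes>\<^bsub>G2\<^esub> inv\<^bsub>G2\<^esub> (\<phi>2 t)"
    using P2.phi_mult[OF sw0] w1 P2.phi_sinv[OF t0] P2.phi_car[OF s0] by simp
  finally have "\<phi>2 s \<otimes>\<^bsub>G2\<^esub> inv\<^bsub>G2\<^esub> (\<phi>2 t) = \<one>\<^bsub>G2\<^esub>" ..
  thus ?thesis using P2.grp.inv_solve_right'[of "\<one>\<^bsub>G2\<^esub>" "\<phi>2 s" "\<phi>2 t"] P2.phi_car[OF s0] P2.phi_car[OF t0]
    by simp
qed

lemma cg_eq:
  assumes F: "is_filter \<xi>" and s: "(s::'a) \<noteq> 0" "\<phi>1 s = g" "s * sinv s \<in> \<xi>"
  shows "cg \<phi>1 \<phi>2 g \<xi> = \<phi>2 s"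
proof -
  have ex: "\<exists>s. s \<noteq> 0 \<and> \<phi>1 s = g \<and> s * sinv s \<in> \<xi>" using s by blast
  define t where "t = (SOME s. s \<noteq> 0 \<and> \<phi>1 s = g \<and> s * sinv s \<in> \<xi>)"
  have t: "t \<noteq> 0 \<and> \<phi>1 t = g \<and> t * sinv t \<in> \<xi>" unfolding t_def by (rule someI_ex[OF ex])
  have "t * sinv t * (s * sinv s) \<in> \<xi>" using filter_mult[OF F] t s by blast
  hence "t * sinv t * (s * sinv s) \<noteq> 0" using filter_nz[OF F] by auto
  hence "\<phi>2 t = \<phi>2 s" using L1[of t s] t s by simp
  thus ?thesis unfolding cg_def t_def[symmetric] .
qed

lemma cg_car:
  assumes F: "is_filter \<xi>" and D: "\<xi> \<in> Dm \<phi>1 g"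
  shows "cg \<phi>1 \<phi>2 g \<xi> \<in> carrier G2"
proof -
  obtain s where s: "s \<noteq> 0" "\<phi>1 s = g" "s * sinv s \<in> \<xi>" using D unfolding Dm_def by blast
  show ?thesis using cg_eq[OF F s] P2.phi_car[OF s(1)] by simp
qed

lemma Dm_car: "\<xi> \<in> Dm \<phi>2 h \<Longrightarrow> h \<in> carrier G2"
  unfolding Dm_def using P2.phi_car by blast

lemma C1:
  assumes F: "is_filter \<xi>" and D: "\<xi> \<in> Dm \<phi>1 s"
  shows "P1.Th (inv\<^bsub>G1\<^esub> s) \<xi> = P2.Th (inv\<^bsub>G2\<^esub> (cg \<phi>1 \<phi>2 s \<xi>)) \<xi>"
proof -
  obtain w where w: "w \<noteq> 0" "\<phi>1 w = s" "w * sinv w \<in> \<xi>" using D unfolding Dm_def by blast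
  have ww: "sinv (sinv w) * sinv w \<in> \<xi>" using w(3) by simp
  have "P1.Th (inv\<^bsub>G1\<^esub> s) \<xi> = theta (sinv w) \<xi>"
    by (rule P1.Th_eq[OF F _ ww]) (use P1.phi_sinv[OF w(1)] w(2) in simp)
  moreover have "P2.Th (inv\<^bsub>G2\<^esub> (cg \<phi>1 \<phi>2 s \<xi>)) \<xi> = theta (sinv w) \<xi>"
    by (rule P2.Th_eq[OF F _ ww]) (use P2.phi_sinv[OF w(1)] cg_eq[OF F w] in simp)
  ultimately show ?thesis by simp
qed

lemma C2:
  assumes F: "is_filter \<xi>" and D: "\<xi> \<in> Dm \<phi>1 s" and Dt: "P1.Th (inv\<^bsub>G1\<^esub> s) \<xi> \<in> Dm \<phi>1 t"
  shows "\<xi> \<in> Dm \<phi>1 (s \<otimes>\<^bsub>G1\<^esub> t) \<and>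
    cg \<phi>1 \<phi>2 (s \<otimes>\<^bsub>G1\<^esub> t) \<xi> = cg \<phi>1 \<phi>2 s \<xi> \<otimes>\<^bsub>G2\<^esub> cg \<phi>1 \<phi>2 t (P1.Th (inv\<^bsub>G1\<^esub> s) \<xi>)"
proof -
  obtain w where w: "w \<noteq> 0" "\<phi>1 w = s" "w * sinv w \<in> \<xi>" using D unfolding Dm_def by blast
  have ww: "sinv (sinv w) * sinv w \<in> \<xi>" using w(3) by simp
  define \<eta> where "\<eta> = theta (sinv w) \<xi>"
  have Theq: "P1.Th (inv\<^bsub>G1\<^esub> s) \<xi> = \<eta>" unfolding \<eta>_def
    by (rule P1.Th_eq[OF F _ ww]) (use P1.phi_sinv[OF w(1)] w(2) in simp)
  have eF: "is_filter \<eta>" unfolding \<eta>_def by (rule theta_filter[OF F ww])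
  obtain v where v: "v \<noteq> 0" "\<phi>1 v = t" "v * sinv v \<in> \<eta>" using Dt Theq unfolding Dm_def by auto
  have bk: "theta w \<eta> = \<xi>" unfolding \<eta>_def by (rule theta_inv'[OF F w(3)])
  have "w * (v * sinv v) * sinv w \<in> \<xi>" using theta_mem[OF eF v(3), of w] bk by simp
  hence wv: "(w * v) * sinv (w * v) \<in> \<xi>" by (simp add: sinv_mult mult.assoc)
  have wv0: "w * v \<noteq> 0" using wv filter_nz[OF F] by auto
  have p1: "\<phi>1 (w * v) = s \<otimes>\<^bsub>G1\<^esub> t" using P1.phi_mult[OF wv0] w v by simp
  have "\<xi> \<in> Dm \<phi>1 (s \<otimes>\<^bsub>G1\<^esub> t)" unfolding Dm_def using wv0 p1 wv by blast
  moreover have "cg \<phi>1 \<phi>2 (s \<otimes>\<^bsub>G1\<^esub> t) \<xi> = \<phi>2 (w * v)" using cg_eq[OF F wv0 p1 wv] .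
  moreover have "\<phi>2 (w * v) = \<phi>2 w \<otimes>\<^bsub>G2\<^esub> \<phi>2 v" by (rule P2.phi_mult[OF wv0])
  moreover have "cg \<phi>1 \<phi>2 s \<xi> = \<phi>2 w" by (rule cg_eq[OF F w])
  moreover have "cg \<phi>1 \<phi>2 t \<eta> = \<phi>2 v" by (rule cg_eq[OF eF v])
  ultimately show ?thesis using Theq by simp
qed

end

lemma TWO_swap: "TWO G1 \<phi>1 G2 \<phi>2 \<Longrightarrow> TWO G2 \<phi>2 G1 \<phi>1"
  unfolding TWO_def TWO_axioms_def by blast

context TWO begin

lemma swp: "TWO G2 \<phi>2 G1 \<phi>1"
  by (rule TWO_swap) unfold_locales

lemma cg_dm:
  assumes F: "is_filter \<xi>" and D: "\<xi> \<in> Dm \<phi>1 g"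
  shows "\<xi> \<in> Dm \<phi>2 (cg \<phi>1 \<phi>2 g \<xi>) \<and> cg \<phi>2 \<phi>1 (cg \<phi>1 \<phi>2 g \<xi>) \<xi> = g"
proof -
  interpret B: TWO ty G2 \<phi>2 G1 \<phi>1 by (rule swp)
  obtain s where s: "s \<noteq> 0" "\<phi>1 s = g" "s * sinv s \<in> \<xi>" using D unfolding Dm_def by blast
  have c: "cg \<phi>1 \<phi>2 g \<xi> = \<phi>2 s" by (rule cg_eq[OF F s])
  have "\<xi> \<in> Dm \<phi>2 (\<phi>2 s)" unfolding Dm_def using s by blast
  moreover have "cg \<phi>2 \<phi>1 (\<phi>2 s) \<xi> = \<phi>1 s" by (rule B.cg_eq[OF F s(1) refl s(3)])
  ultimately show ?thesis using c s by simp
qed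

end


definition Psi :: "('a::{semigroup_mult,mult_zero} \<Rightarrow> 'g1) \<Rightarrow> ('a \<Rightarrow> 'g2) \<Rightarrow> ('g1 \<Rightarrow> 'a set \<Rightarrow> 'r::comm_ring_1)
    \<Rightarrow> ('g2 \<Rightarrow> 'a set \<Rightarrow> 'r)" where
  "Psi \<phi>1 \<phi>2 a = (\<lambda>h \<xi>. if is_filter \<xi> \<and> \<xi> \<in> Dm \<phi>2 h then a (cg \<phi>2 \<phi>1 h \<xi>) \<xi> else 0)"

context ISG begin
definition Ob :: "'a \<Rightarrow> 'a set set" where "Ob s = Vset (s * sinv s) {}"

lemma Ob_open: "openin tight_top (Ob (s::'a))"
  unfolding Ob_def by (rule Vset_open) (use ssinv_idem idems_def in auto)

lemma Ob_mem: "\<xi> \<in> Ob s \<longleftrightarrow> \<xi> \<in> tight_filters \<and> (s::'a) * sinv s \<in> \<xi>"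
  unfolding Ob_def Vset_def by simp
end

context TWO begin

lemma fin_vals:
  assumes K: "compactin tight_top K" and KD: "K \<subseteq> Dm \<phi>1 g"
  shows "finite ((\<lambda>\<xi>. cg \<phi>1 \<phi>2 g \<xi>) ` K)"
proof -
  define W where "W = {s. s \<noteq> 0 \<and> \<phi>1 s = g}"
  have KT: "K \<subseteq> tight_filters" using compactin_subset_topspace[OF K] topspace_tight_top by simp
  have op: "\<forall>U\<in>Ob ` W. openin tight_top U" using Ob_open by blast
  have cov: "K \<subseteq> \<Union>(Ob ` W)"
  proof
    fix \<xi> assume x: "\<xi> \<in> K"
    then obtain s where "s \<noteq> 0" "\<phi>1 s = g" "s * sinv s \<in> \<xi>" using KD unfolding Dm_def by blast
    hence "s \<in> W" "\<xi> \<in> Ob s" unfolding W_def using Ob_mem x KT by blast+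
    thus "\<xi> \<in> \<Union>(Ob ` W)" by blast
  qed
  have "\<forall>\<U>. (\<forall>U \<in> \<U>. openin tight_top U) \<and> K \<subseteq> \<Union>\<U> \<longrightarrow> (\<exists>\<F>. finite \<F> \<and> \<F> \<subseteq> \<U> \<and> K \<subseteq> \<Union>\<F>)"
    using K unfolding compactin_def by blast
  hence "\<exists>\<F>. finite \<F> \<and> \<F> \<subseteq> Ob ` W \<and> K \<subseteq> \<Union>\<F>" using op cov by blast
  then obtain F where F: "finite F" "F \<subseteq> Ob ` W" "K \<subseteq> \<Union>F" by blast
  obtain W' where W': "W' \<subseteq> W" "finite W'" "F = Ob ` W'" using finite_subset_image[OF F(1,2)] by blast
  have "(\<lambda>\<xi>. cg \<phi>1 \<phi>2 g \<xi>) ` K \<subseteq> \<phi>2 ` W'"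
  proof
    fix z assume "z \<in> (\<lambda>\<xi>. cg \<phi>1 \<phi>2 g \<xi>) ` K"
    then obtain \<xi> where x: "\<xi> \<in> K" "z = cg \<phi>1 \<phi>2 g \<xi>" by blast
    then obtain s where s: "s \<in> W'" "\<xi> \<in> Ob s" using F(3) W'(3) by blast
    have T: "\<xi> \<in> tight_filters" "s * sinv s \<in> \<xi>" using s(2) Ob_mem by auto
    have "s \<noteq> 0" "\<phi>1 s = g" using s(1) W'(1) W_def by auto
    hence "cg \<phi>1 \<phi>2 g \<xi> = \<phi>2 s" using cg_eq[OF tight_filter[OF T(1)] _ _ T(2)] by simp
    thus "z \<in> \<phi>2 ` W'" using x s by simp
  qed
  thus ?thesis using finite_subset W'(2) by blast
qed

lemma Psi_nz:
  assumes "Psi \<phi>1 \<phi>2 a h \<xi> \<noteq> 0"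
  shows "is_filter \<xi> \<and> \<xi> \<in> Dm \<phi>2 h \<and> a (cg \<phi>2 \<phi>1 h \<xi>) \<xi> \<noteq> 0"
  using assms unfolding Psi_def by (auto split: if_splits)

lemma level_piece:
  assumes a: "a \<in> skew_carrier G1 \<phi>1" and g: "g \<in> carrier G1" and r: "r \<noteq> 0"
  shows "openin tight_top ({\<xi>. a g \<xi> = r} \<inter> {\<xi>. is_filter \<xi> \<and> \<xi> \<in> Dm \<phi>2 h \<and> cg \<phi>2 \<phi>1 h \<xi> = g})
    \<and> compactin tight_top ({\<xi>. a g \<xi> = r} \<inter> {\<xi>. is_filter \<xi> \<and> \<xi> \<in> Dm \<phi>2 h \<and> cg \<phi>2 \<phi>1 h \<xi> = g})"
proof -
  interpret B: TWO ty G2 \<phi>2 G1 \<phi>1 by (rule swp)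
  define K where "K = {\<xi>. a g \<xi> = r}"
  define P where "P = {\<xi>. is_filter \<xi> \<and> \<xi> \<in> Dm \<phi>2 h \<and> cg \<phi>2 \<phi>1 h \<xi> = g}"
  have KT: "K \<in> Tcg \<phi>1 g" unfolding K_def by (rule P1.carrier_Lc(2)[OF a g r])
  have Kc: "compactin tight_top K" and Ko: "openin tight_top K" using KT unfolding Tcg_def Tc_def by auto
  have KD: "K \<subseteq> tight_filters \<inter> Dm \<phi>1 g" by (rule P1.Tcg_sub[OF KT])
  define Wp where "Wp = {s. s \<noteq> 0 \<and> \<phi>1 s = g \<and> \<phi>2 s = h}"
  define Wn where "Wn = {s. s \<noteq> 0 \<and> \<phi>1 s = g \<and> \<phi>2 s \<noteq> h}"
  define Op where "Op = \<Union>(Ob ` Wp)"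
  define On where "On = \<Union>(Ob ` Wn)"
  have Opo: "openin tight_top Op" unfolding Op_def using Ob_open by blast
  have Ono: "openin tight_top On" unfolding On_def using Ob_open by blast
  have eq1: "K \<inter> P = K \<inter> Op"
  proof (rule equalityI; rule subsetI)
    fix \<xi> assume x: "\<xi> \<in> K \<inter> P"
    hence F: "is_filter \<xi>" and D2: "\<xi> \<in> Dm \<phi>2 h" and c: "cg \<phi>2 \<phi>1 h \<xi> = g" unfolding P_def by auto
    obtain s where s: "s \<noteq> 0" "\<phi>2 s = h" "s * sinv s \<in> \<xi>" using D2 unfolding Dm_def by blast
    have "\<phi>1 s = g" using B.cg_eq[OF F s] c by simp
    hence "s \<in> Wp" unfolding Wp_def using s by blast
    moreover have "\<xi> \<in> Ob s" using Ob_mem s x KD by blast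
    ultimately show "\<xi> \<in> K \<inter> Op" using x unfolding Op_def by blast
  next
    fix \<xi> assume x: "\<xi> \<in> K \<inter> Op"
    then obtain s where s: "s \<in> Wp" "\<xi> \<in> Ob s" unfolding Op_def by blast
    have T: "\<xi> \<in> tight_filters" "s * sinv s \<in> \<xi>" using s(2) Ob_mem by auto
    have F: "is_filter \<xi>" by (rule tight_filter[OF T(1)])
    have s': "s \<noteq> 0" "\<phi>2 s = h" "\<phi>1 s = g" using s(1) unfolding Wp_def by auto
    have "\<xi> \<in> Dm \<phi>2 h" unfolding Dm_def using s' T by blast
    moreover have "cg \<phi>2 \<phi>1 h \<xi> = g" using B.cg_eq[OF F s'(1,2) T(2)] s'(3) by simp
    ultimately show "\<xi> \<in> K \<inter> P" using x F unfolding P_def by blast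
  qed
  have eq2: "K \<inter> Op = (topspace tight_top - On) \<inter> K"
  proof (rule equalityI; rule subsetI)
    fix \<xi> assume x: "\<xi> \<in> K \<inter> Op"
    then obtain s where s: "s \<in> Wp" "\<xi> \<in> Ob s" unfolding Op_def by blast
    have T: "\<xi> \<in> tight_filters" "s * sinv s \<in> \<xi>" using s(2) Ob_mem by auto
    have F: "is_filter \<xi>" by (rule tight_filter[OF T(1)])
    have "\<xi> \<notin> On"
    proof
      assume "\<xi> \<in> On"
      then obtain s' where s': "s' \<in> Wn" "\<xi> \<in> Ob s'" unfolding On_def by blast
      have T': "s' * sinv s' \<in> \<xi>" using s'(2) Ob_mem by auto
      have "s * sinv s * (s' * sinv s') \<noteq> 0" using filter_mult[OF F T(2) T'] filter_nz[OF F] by auto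
      moreover have ss: "s \<noteq> 0" "\<phi>1 s = g" "\<phi>2 s = h" using s(1) unfolding Wp_def by auto
      moreover have ss': "s' \<noteq> 0" "\<phi>1 s' = g" "\<phi>2 s' \<noteq> h" using s'(1) unfolding Wn_def by auto
      ultimately have "\<phi>2 s = \<phi>2 s'" using L1[of s s'] by simp
      thus False using ss ss' by simp
    qed
    thus "\<xi> \<in> (topspace tight_top - On) \<inter> K" using x T topspace_tight_top by blast
  next
    fix \<xi> assume x: "\<xi> \<in> (topspace tight_top - On) \<inter> K"
    hence xK: "\<xi> \<in> K" and nOn: "\<xi> \<notin> On" by auto
    have T: "\<xi> \<in> tight_filters" using xK KD by blast
    obtain s where s: "s \<noteq> 0" "\<phi>1 s = g" "s * sinv s \<in> \<xi>" using xK KD unfolding Dm_def by blast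
    have xo: "\<xi> \<in> Ob s" using Ob_mem T s by blast
    show "\<xi> \<in> K \<inter> Op"
    proof (cases "\<phi>2 s = h")
      case True
      hence "s \<in> Wp" unfolding Wp_def using s by blast
      thus ?thesis using xK xo unfolding Op_def by blast
    next
      case False
      hence "s \<in> Wn" unfolding Wn_def using s by blast
      thus ?thesis using nOn xo unfolding On_def by blast
    qed
  qed
  have "openin tight_top (K \<inter> P)" unfolding eq1 using Ko Opo by blast
  moreover have "compactin tight_top (K \<inter> P)" unfolding eq1 eq2
    by (rule closed_Int_compactin[OF closedin_diff[OF closedin_topspace Ono] Kc])
  ultimately show ?thesis unfolding K_def P_def by blast
qed

lemma Psi_carrier:
  assumes a: "a \<in> skew_carrier G1 \<phi>1"
  shows "Psi \<phi>1 \<phi>2 a \<in> skew_carrier G2 \<phi>2"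
proof -
  interpret B: TWO ty G2 \<phi>2 G1 \<phi>1 by (rule swp)
  define b where "b = Psi \<phi>1 \<phi>2 a"
  define S where "S = {g. a g \<noteq> (\<lambda>_. 0)}"
  have Sf: "finite S" using a unfolding S_def skew_carrier_def by blast
  have Sc: "S \<subseteq> carrier G1" using a unfolding S_def skew_carrier_def by blast
  have anz: "a g \<xi> \<noteq> 0 \<Longrightarrow> g \<in> S" for g \<xi> unfolding S_def by auto
  have sub0: "{h. b h \<noteq> (\<lambda>_. 0)} \<subseteq> (\<Union>g\<in>S. \<Union>r\<in>range (a g) - {0}. (\<lambda>\<xi>. cg \<phi>1 \<phi>2 g \<xi>) ` {\<xi>. a g \<xi> = r})"
  proof
    fix h assume "h \<in> {h. b h \<noteq> (\<lambda>_. 0)}"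
    then obtain \<xi> where "b h \<xi> \<noteq> 0" by auto
    hence n: "is_filter \<xi>" "\<xi> \<in> Dm \<phi>2 h" "a (cg \<phi>2 \<phi>1 h \<xi>) \<xi> \<noteq> 0" using Psi_nz unfolding b_def by blast+
    define g where "g = cg \<phi>2 \<phi>1 h \<xi>"
    have "h = cg \<phi>1 \<phi>2 g \<xi>" using B.cg_dm[OF n(1,2)] unfolding g_def by simp
    moreover have "g \<in> S" using anz n(3) g_def by blast
    ultimately show "h \<in> (\<Union>g\<in>S. \<Union>r\<in>range (a g) - {0}. (\<lambda>\<xi>. cg \<phi>1 \<phi>2 g \<xi>) ` {\<xi>. a g \<xi> = r})"
      using n(3) unfolding g_def[symmetric] by blast
  qed
  have f1: "finite (range (a g) - {0})" if g: "g \<in> S" for g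
    using P1.carrier_Lc(1)[OF a] g Sc by blast
  have f2: "finite ((\<lambda>\<xi>. cg \<phi>1 \<phi>2 g \<xi>) ` {\<xi>. a g \<xi> = r})" if g: "g \<in> S" and r: "r \<in> range (a g) - {0}" for g r
  proof -
    have gc: "g \<in> carrier G1" using g Sc by blast
    have KT: "{\<xi>. a g \<xi> = r} \<in> Tcg \<phi>1 g" using P1.carrier_Lc(2)[OF a gc] r by blast
    show ?thesis
      by (rule fin_vals) (use KT P1.Tcg_sub[OF KT] in \<open>auto simp: Tcg_def Tc_def\<close>)
  qed
  have fU: "finite (\<Union>g\<in>S. \<Union>r\<in>range (a g) - {0}. (\<lambda>\<xi>. cg \<phi>1 \<phi>2 g \<xi>) ` {\<xi>. a g \<xi> = r})"
    by (intro finite_UN_I Sf f1 f2)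
  have fin: "finite {h. b h \<noteq> (\<lambda>_. 0)}" by (rule finite_subset[OF sub0 fU])
  have car: "b h \<noteq> (\<lambda>_. 0) \<Longrightarrow> h \<in> carrier G2" for h
  proof -
    assume "b h \<noteq> (\<lambda>_. 0)"
    then obtain \<xi> where "b h \<xi> \<noteq> 0" by auto
    thus ?thesis using Psi_nz Dm_car unfolding b_def by blast
  qed
  have Lc: "b h \<in> Lc (Tcg \<phi>2 h)" if h: "h \<in> carrier G2" for h
  proof -
    have "range (b h) \<subseteq> insert 0 (\<Union>g\<in>S. range (a g))"
    proof
      fix z assume "z \<in> range (b h)"
      then obtain \<xi> where z: "z = b h \<xi>" by blast
      show "z \<in> insert 0 (\<Union>g\<in>S. range (a g))"
      proof (cases "z = 0")
        case False
        hence "is_filter \<xi> \<and> \<xi> \<in> Dm \<phi>2 h \<and> a (cg \<phi>2 \<phi>1 h \<xi>) \<xi> \<noteq> 0" using Psi_nz z unfolding b_def by blast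
        hence "z = a (cg \<phi>2 \<phi>1 h \<xi>) \<xi>" "cg \<phi>2 \<phi>1 h \<xi> \<in> S" using z anz unfolding b_def Psi_def by auto
        thus ?thesis by blast
      qed simp
    qed
    moreover have "finite (insert 0 (\<Union>g\<in>S. range (a g)))" using Sf Sc P1.carrier_Lc(1)[OF a] by blast
    ultimately have fr: "finite (range (b h))" by (rule finite_subset)
    have lev: "{\<xi>. b h \<xi> = r} \<in> Tcg \<phi>2 h" if r: "r \<noteq> 0" for r
    proof -
      define Q where "Q = (\<lambda>g. {\<xi>. a g \<xi> = r} \<inter> {\<xi>. is_filter \<xi> \<and> \<xi> \<in> Dm \<phi>2 h \<and> cg \<phi>2 \<phi>1 h \<xi> = g})"
      have Leq: "{\<xi>. b h \<xi> = r} = \<Union>(Q ` S)"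
      proof (rule equalityI; rule subsetI)
        fix \<xi> assume "\<xi> \<in> {\<xi>. b h \<xi> = r}"
        hence x: "b h \<xi> = r" by simp
        hence n: "is_filter \<xi>" "\<xi> \<in> Dm \<phi>2 h" "a (cg \<phi>2 \<phi>1 h \<xi>) \<xi> \<noteq> 0" using Psi_nz r unfolding b_def by blast+
        have "a (cg \<phi>2 \<phi>1 h \<xi>) \<xi> = r" using x n unfolding b_def Psi_def by simp
        thus "\<xi> \<in> \<Union>(Q ` S)" using n anz unfolding Q_def by blast
      next
        fix \<xi> assume "\<xi> \<in> \<Union>(Q ` S)"
        thus "\<xi> \<in> {\<xi>. b h \<xi> = r}" unfolding Q_def b_def Psi_def by auto
      qed
      have QP: "openin tight_top (Q g) \<and> compactin tight_top (Q g)" if "g \<in> S" for g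
        unfolding Q_def by (rule level_piece[OF a _ r]) (use that Sc in blast)
      have op: "openin tight_top {\<xi>. b h \<xi> = r}" unfolding Leq using QP by blast
      have cp: "compactin tight_top {\<xi>. b h \<xi> = r}" unfolding Leq
        by (rule compactin_Union) (use QP Sf in auto)
      have sub: "{\<xi>. b h \<xi> = r} \<subseteq> (\<Union>x\<in>Eg \<phi>2 h. Vset x {})"
      proof
        fix \<xi> assume x: "\<xi> \<in> {\<xi>. b h \<xi> = r}"
        hence n: "is_filter \<xi>" "\<xi> \<in> Dm \<phi>2 h" "a (cg \<phi>2 \<phi>1 h \<xi>) \<xi> \<noteq> 0" using Psi_nz r unfolding b_def by auto
        have T: "\<xi> \<in> tight_filters" using P1.carrier_nz[OF a n(3)] by blast
        obtain s where s: "s \<noteq> 0" "\<phi>2 s = h" "s * sinv s \<in> \<xi>" using n(2) unfolding Dm_def by blast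
        have "s * sinv s \<in> Eg \<phi>2 h"
          by (rule P2.Eg_mem[OF _ s(1,2)]) (use ssinv_idem idem_le_refl idems_def in auto)
        moreover have "\<xi> \<in> Vset (s * sinv s) {}" unfolding Vset_def using T s by simp
        ultimately show "\<xi> \<in> (\<Union>x\<in>Eg \<phi>2 h. Vset x {})" by blast
      qed
      show ?thesis unfolding Tcg_def Tc_def using op cp sub by blast
    qed
    show ?thesis unfolding Lc_def using fr lev by blast
  qed
  have "b \<in> skew_carrier G2 \<phi>2" unfolding skew_carrier_def using fin car Lc by blast
  thus ?thesis unfolding b_def .
qed

end


context TWO begin

lemma Psi_inv:
  assumes a: "a \<in> skew_carrier G1 \<phi>1"
  shows "Psi \<phi>2 \<phi>1 (Psi \<phi>1 \<phi>2 a) = a"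
proof (intro ext)
  fix g \<xi>
  show "Psi \<phi>2 \<phi>1 (Psi \<phi>1 \<phi>2 a) g \<xi> = a g \<xi>"
  proof (cases "is_filter \<xi> \<and> \<xi> \<in> Dm \<phi>1 g")
    case True
    have c: "\<xi> \<in> Dm \<phi>2 (cg \<phi>1 \<phi>2 g \<xi>) \<and> cg \<phi>2 \<phi>1 (cg \<phi>1 \<phi>2 g \<xi>) \<xi> = g" using cg_dm True by blast
    show ?thesis unfolding Psi_def using True c by simp
  next
    case False
    hence "a g \<xi> = 0" using P1.carrier_nz[OF a] tight_filter by blast
    thus ?thesis unfolding Psi_def using False by auto
  qed
qed

lemma Psi_add: "Psi \<phi>1 \<phi>2 (skew_add a b) = skew_add (Psi \<phi>1 \<phi>2 a) (Psi \<phi>1 \<phi>2 b)"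
  unfolding Psi_def skew_add_def by (intro ext) simp

lemma Psi_smult: "Psi \<phi>1 \<phi>2 (skew_smult r a) = skew_smult r (Psi \<phi>1 \<phi>2 a)"
  unfolding Psi_def skew_smult_def by (intro ext) simp

lemma Psi_mult:
  assumes a: "a \<in> skew_carrier G1 \<phi>1" and b: "b \<in> skew_carrier G1 \<phi>1"
  shows "Psi \<phi>1 \<phi>2 (skew_mult G1 \<phi>1 a b) = skew_mult G2 \<phi>2 (Psi \<phi>1 \<phi>2 a) (Psi \<phi>1 \<phi>2 b)"
proof (intro ext)
  interpret B: TWO ty G2 \<phi>2 G1 \<phi>1 by (rule swp)
  fix h \<xi>
  define a' where "a' = Psi \<phi>1 \<phi>2 a"
  define b' where "b' = Psi \<phi>1 \<phi>2 b"
  have a': "a' \<in> skew_carrier G2 \<phi>2" unfolding a'_def by (rule Psi_carrier[OF a])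
  have b': "b' \<in> skew_carrier G2 \<phi>2" unfolding b'_def by (rule Psi_carrier[OF b])
  define S2 where "S2 = {(s, t). a' s \<noteq> (\<lambda>_. 0) \<and> b' t \<noteq> (\<lambda>_. 0) \<and> s \<otimes>\<^bsub>G2\<^esub> t = h}"
  define f2 where "f2 = (\<lambda>p. a' (fst p) \<xi> * b' (snd p) (P2.Th (inv\<^bsub>G2\<^esub> (fst p)) \<xi>))"
  have R: "skew_mult G2 \<phi>2 a' b' h \<xi> = sum f2 S2"
    unfolding P2.MF[OF a' b'] S2_def f2_def by (intro sum.cong refl) auto
  have S2f: "finite S2"
  proof -
    have "S2 \<subseteq> {s. a' s \<noteq> (\<lambda>_. 0)} \<times> {t. b' t \<noteq> (\<lambda>_. 0)}" unfolding S2_def by auto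
    moreover have "finite ({s. a' s \<noteq> (\<lambda>_. 0)} \<times> {t. b' t \<noteq> (\<lambda>_. 0)})"
      using a' b' unfolding skew_carrier_def by auto
    ultimately show ?thesis by (rule finite_subset)
  qed
  have f2nz: "is_filter \<xi> \<and> \<xi> \<in> Dm \<phi>2 s' \<and> a (cg \<phi>2 \<phi>1 s' \<xi>) \<xi> \<noteq> 0
      \<and> is_filter (P2.Th (inv\<^bsub>G2\<^esub> s') \<xi>) \<and> P2.Th (inv\<^bsub>G2\<^esub> s') \<xi> \<in> Dm \<phi>2 t'
      \<and> b (cg \<phi>2 \<phi>1 t' (P2.Th (inv\<^bsub>G2\<^esub> s') \<xi>)) (P2.Th (inv\<^bsub>G2\<^esub> s') \<xi>) \<noteq> 0
      \<and> f2 (s', t') = a (cg \<phi>2 \<phi>1 s' \<xi>) \<xi> * b (cg \<phi>2 \<phi>1 t' (P2.Th (inv\<^bsub>G2\<^esub> s') \<xi>)) (P2.Th (inv\<^bsub>G2\<^esub> s') \<xi>)"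
    if nz: "f2 (s', t') \<noteq> 0" for s' t'
  proof -
    have n1: "a' s' \<xi> \<noteq> 0" and n2: "b' t' (P2.Th (inv\<^bsub>G2\<^esub> s') \<xi>) \<noteq> 0" using nz unfolding f2_def by auto
    have A1: "is_filter \<xi> \<and> \<xi> \<in> Dm \<phi>2 s' \<and> a (cg \<phi>2 \<phi>1 s' \<xi>) \<xi> \<noteq> 0"
      using Psi_nz n1 unfolding a'_def by blast
    have A2: "is_filter (P2.Th (inv\<^bsub>G2\<^esub> s') \<xi>) \<and> P2.Th (inv\<^bsub>G2\<^esub> s') \<xi> \<in> Dm \<phi>2 t'
      \<and> b (cg \<phi>2 \<phi>1 t' (P2.Th (inv\<^bsub>G2\<^esub> s') \<xi>)) (P2.Th (inv\<^bsub>G2\<^esub> s') \<xi>) \<noteq> 0"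
      using Psi_nz n2 unfolding b'_def by blast
    have "f2 (s', t') = a (cg \<phi>2 \<phi>1 s' \<xi>) \<xi> * b (cg \<phi>2 \<phi>1 t' (P2.Th (inv\<^bsub>G2\<^esub> s') \<xi>)) (P2.Th (inv\<^bsub>G2\<^esub> s') \<xi>)"
      unfolding f2_def a'_def b'_def Psi_def using A1 A2 by simp
    thus ?thesis using A1 A2 by blast
  qed
  show "Psi \<phi>1 \<phi>2 (skew_mult G1 \<phi>1 a b) h \<xi> = skew_mult G2 \<phi>2 a' b' h \<xi>"
  proof (cases "is_filter \<xi> \<and> \<xi> \<in> Dm \<phi>2 h")
    case False
    have "f2 p = 0" if p: "p \<in> S2" for p
    proof (rule ccontr)
      obtain s' t' where st: "p = (s', t')" by (cases p)
      assume "f2 p \<noteq> 0"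
      hence nz: "f2 (s', t') \<noteq> 0" using st by simp
      note P = f2nz[OF nz]
      have "s' \<otimes>\<^bsub>G2\<^esub> t' = h" using p st unfolding S2_def by simp
      moreover have "\<xi> \<in> Dm \<phi>2 (s' \<otimes>\<^bsub>G2\<^esub> t')" using B.C2 P by blast
      ultimately show False using False P by simp
    qed
    hence "sum f2 S2 = 0" by simp
    thus ?thesis using R False unfolding Psi_def by auto
  next
    case True
    hence F: "is_filter \<xi>" and Dh: "\<xi> \<in> Dm \<phi>2 h" by auto
    define g0 where "g0 = cg \<phi>2 \<phi>1 h \<xi>"
    have g0h: "cg \<phi>1 \<phi>2 g0 \<xi> = h" using B.cg_dm[OF F Dh] unfolding g0_def by simp
    define S1 where "S1 = {(s, t). a s \<noteq> (\<lambda>_. 0) \<and> b t \<noteq> (\<lambda>_. 0) \<and> s \<otimes>\<^bsub>G1\<^esub> t = g0}"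
    define f1 where "f1 = (\<lambda>p. a (fst p) \<xi> * b (snd p) (P1.Th (inv\<^bsub>G1\<^esub> (fst p)) \<xi>))"
    have L: "Psi \<phi>1 \<phi>2 (skew_mult G1 \<phi>1 a b) h \<xi> = sum f1 S1"
      unfolding Psi_def using True unfolding g0_def[symmetric] P1.MF[OF a b] S1_def f1_def
      by (simp, intro sum.cong refl) auto
    have S1f: "finite S1"
    proof -
      have "S1 \<subseteq> {s. a s \<noteq> (\<lambda>_. 0)} \<times> {t. b t \<noteq> (\<lambda>_. 0)}" unfolding S1_def by auto
      moreover have "finite ({s. a s \<noteq> (\<lambda>_. 0)} \<times> {t. b t \<noteq> (\<lambda>_. 0)})"
        using a b unfolding skew_carrier_def by auto
      ultimately show ?thesis by (rule finite_subset)
    qed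
    define T1 where "T1 = S1 - {p. f1 p = 0}"
    define T2 where "T2 = S2 - {p. f2 p = 0}"
    have e1: "sum f1 S1 = sum f1 T1" unfolding T1_def by (rule sum.setdiff_irrelevant[OF S1f, symmetric])
    have e2: "sum f2 S2 = sum f2 T2" unfolding T2_def by (rule sum.setdiff_irrelevant[OF S2f, symmetric])
    define j where "j = (\<lambda>p. (cg \<phi>1 \<phi>2 (fst p) \<xi>, cg \<phi>1 \<phi>2 (snd p) (P1.Th (inv\<^bsub>G1\<^esub> (fst p)) \<xi>)))"
    define i where "i = (\<lambda>p. (cg \<phi>2 \<phi>1 (fst p) \<xi>, cg \<phi>2 \<phi>1 (snd p) (P2.Th (inv\<^bsub>G2\<^esub> (fst p)) \<xi>)))"
    have Jprops: "i (j p) = p \<and> j p \<in> T2 \<and> f2 (j p) = f1 p" if p: "p \<in> T1" for p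
    proof -
      obtain s t where st: "p = (s, t)" by (cases p)
      have pS: "a s \<noteq> (\<lambda>_. 0)" "b t \<noteq> (\<lambda>_. 0)" "s \<otimes>\<^bsub>G1\<^esub> t = g0" using p st unfolding T1_def S1_def by auto
      define \<eta> where "\<eta> = P1.Th (inv\<^bsub>G1\<^esub> s) \<xi>"
      have nz: "a s \<xi> \<noteq> 0" "b t \<eta> \<noteq> 0" using p st unfolding T1_def f1_def \<eta>_def by auto
      have cs: "\<xi> \<in> Dm \<phi>1 s" using P1.carrier_nz[OF a nz(1)] by blast
      have ct: "\<eta> \<in> tight_filters" "\<eta> \<in> Dm \<phi>1 t" using P1.carrier_nz[OF b nz(2)] by blast+
      have eF: "is_filter \<eta>" by (rule tight_filter[OF ct(1)])
      define s' where "s' = cg \<phi>1 \<phi>2 s \<xi>"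
      define t' where "t' = cg \<phi>1 \<phi>2 t \<eta>"
      have ds: "\<xi> \<in> Dm \<phi>2 s'" "cg \<phi>2 \<phi>1 s' \<xi> = s" using cg_dm[OF F cs] unfolding s'_def by auto
      have dt: "\<eta> \<in> Dm \<phi>2 t'" "cg \<phi>2 \<phi>1 t' \<eta> = t" using cg_dm[OF eF ct(2)] unfolding t'_def by auto
      have th: "P2.Th (inv\<^bsub>G2\<^esub> s') \<xi> = \<eta>" using C1[OF F cs] unfolding s'_def \<eta>_def by simp
      have jp: "j p = (s', t')" unfolding j_def st s'_def t'_def \<eta>_def by simp
      have as': "a' s' \<xi> = a s \<xi>" unfolding a'_def Psi_def using F ds by simp
      have bt': "b' t' \<eta> = b t \<eta>" unfolding b'_def Psi_def using eF dt by simp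
      have f2eq: "f2 (s', t') = f1 p" unfolding f2_def f1_def st using as' bt' th \<eta>_def by simp
      have "s' \<otimes>\<^bsub>G2\<^esub> t' = cg \<phi>1 \<phi>2 (s \<otimes>\<^bsub>G1\<^esub> t) \<xi>"
        using C2[OF F cs ct(2)[unfolded \<eta>_def]] unfolding s'_def t'_def \<eta>_def by simp
      hence prod: "s' \<otimes>\<^bsub>G2\<^esub> t' = h" using pS(3) g0h by simp
      have "a' s' \<noteq> (\<lambda>_. 0)" using as' nz(1) by (metis)
      moreover have "b' t' \<noteq> (\<lambda>_. 0)" using bt' nz(2) by (metis)
      moreover have "f2 (s', t') \<noteq> 0" using f2eq p unfolding T1_def by simp
      ultimately have "j p \<in> T2" unfolding jp T2_def S2_def using prod by simp
      moreover have "i (s', t') = (s, t)" unfolding i_def using ds(2) th dt(2) by simp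
      hence "i (j p) = p" using jp st by simp
      ultimately show ?thesis using f2eq jp by simp
    qed
    have Iprops: "j (i q) = q \<and> i q \<in> T1" if q: "q \<in> T2" for q
    proof -
      obtain s' t' where st: "q = (s', t')" by (cases q)
      have qS: "a' s' \<noteq> (\<lambda>_. 0)" "b' t' \<noteq> (\<lambda>_. 0)" "s' \<otimes>\<^bsub>G2\<^esub> t' = h" using q st unfolding T2_def S2_def by auto
      have nz: "f2 (s', t') \<noteq> 0" using q st unfolding T2_def by simp
      note P = f2nz[OF nz]
      define \<eta> where "\<eta> = P2.Th (inv\<^bsub>G2\<^esub> s') \<xi>"
      define s where "s = cg \<phi>2 \<phi>1 s' \<xi>"
      define t where "t = cg \<phi>2 \<phi>1 t' \<eta>"
      have eF: "is_filter \<eta>" using P unfolding \<eta>_def by blast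
      have ds: "\<xi> \<in> Dm \<phi>1 s" "cg \<phi>1 \<phi>2 s \<xi> = s'" using B.cg_dm[OF F] P unfolding s_def by auto
      have dt: "\<eta> \<in> Dm \<phi>1 t" "cg \<phi>1 \<phi>2 t \<eta> = t'" using B.cg_dm[OF eF] P unfolding t_def \<eta>_def by auto
      have th: "P1.Th (inv\<^bsub>G1\<^esub> s) \<xi> = \<eta>" using B.C1[OF F] P unfolding s_def \<eta>_def by simp
      have iq: "i q = (s, t)" unfolding i_def st s_def t_def \<eta>_def by simp
      have f1eq: "f1 (s, t) = f2 (s', t')" unfolding f1_def using P th unfolding s_def t_def \<eta>_def by simp
      have "cg \<phi>2 \<phi>1 (s' \<otimes>\<^bsub>G2\<^esub> t') \<xi> = s \<otimes>\<^bsub>G1\<^esub> t"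
        using B.C2[OF F] P unfolding s_def t_def \<eta>_def by blast
      hence prod: "s \<otimes>\<^bsub>G1\<^esub> t = g0" using qS(3) unfolding g0_def by simp
      have "a s \<noteq> (\<lambda>_. 0)" using P unfolding s_def by (metis)
      moreover have "b t \<noteq> (\<lambda>_. 0)" using P unfolding t_def \<eta>_def by (metis)
      moreover have "f1 (s, t) \<noteq> 0" using f1eq nz by simp
      ultimately have "i q \<in> T1" unfolding iq T1_def S1_def using prod by simp
      moreover have "j (s, t) = (s', t')" unfolding j_def using ds(2) th dt(2) by simp
      hence "j (i q) = q" using iq st by simp
      ultimately show ?thesis by simp
    qed
    have "sum f1 T1 = sum f2 T2"
      by (rule sum.reindex_bij_witness[of T1 i j T2]) (use Jprops Iprops in auto)
    thus ?thesis using L R e1 e2 by simp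
  qed
qed

end


theorem mainTheorem14:
  fixes G1 :: "('g1, 'b1) monoid_scheme" and \<phi>1 :: "'a::{semigroup_mult,mult_zero} \<Rightarrow> 'g1"
    and G2 :: "('g2, 'b2) monoid_scheme" and \<phi>2 :: "'a \<Rightarrow> 'g2"
  assumes "inverse_semigroup_with_zero TYPE('a)"
    and "pure_grading G1 \<phi>1"
    and "pure_grading G2 \<phi>2"
  shows "LR_isomorphic G1 \<phi>1 G2 \<phi>2 TYPE('r::comm_ring_1)"
proof -
  interpret A: TWO "TYPE('a)" G1 \<phi>1 G2 \<phi>2 by unfold_locales (use assms in auto)
  interpret B: TWO "TYPE('a)" G2 \<phi>2 G1 \<phi>1 by unfold_locales (use assms in auto)
  let ?P = "Psi \<phi>1 \<phi>2 :: ('g1 \<Rightarrow> 'a set \<Rightarrow> 'r) \<Rightarrow> ('g2 \<Rightarrow> 'a set \<Rightarrow> 'r)"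
  let ?Q = "Psi \<phi>2 \<phi>1 :: ('g2 \<Rightarrow> 'a set \<Rightarrow> 'r) \<Rightarrow> ('g1 \<Rightarrow> 'a set \<Rightarrow> 'r)"
  have bij: "bij_betw ?P (skew_carrier G1 \<phi>1) (skew_carrier G2 \<phi>2)"
  proof (rule bij_betw_byWitness[where f' = ?Q])
    show "\<forall>a\<in>skew_carrier G1 \<phi>1. ?Q (?P a) = a" using A.Psi_inv by blast
    show "\<forall>a'\<in>skew_carrier G2 \<phi>2. ?P (?Q a') = a'" using B.Psi_inv by blast
    show "?P ` skew_carrier G1 \<phi>1 \<subseteq> skew_carrier G2 \<phi>2" using A.Psi_carrier by blast
    show "?Q ` skew_carrier G2 \<phi>2 \<subseteq> skew_carrier G1 \<phi>1" using B.Psi_carrier by blast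
  qed
  show ?thesis unfolding LR_isomorphic_def
    using bij A.Psi_add A.Psi_mult A.Psi_smult by blast
qed


end
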